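(* Let $Q$ and $R$ be $d\times d$ positive semidefinite matrices, and put $y=\sum_{k=1}^d\sqrt{Q_{kk}R_{kk}}$. Then for every unitarily invariant norm $|||\cdot|||$ on $d\times d$ matrices ($d\ge2$), $$|||Q+R|||\le \left|\left|\left|\begin{pmatrix}\operatorname{Tr}Q & y\\ y&\operatorname{Tr}R\end{pmatrix}\oplus 0_{d-2}\right|\right|\right|.$$ Moreover, for the Schatten quasi-norms with $0<q\le1$ the reversed inequality holds: $\|Q+R\|_q\ge \left\|\begin{pmatrix}\operatorname{Tr}Q & y\\ y&\operatorname{Tr}R\end{pmatrix}\right\|_q$.
   Context: $\|X\|_q=(\operatorname{Tr}|X|^q)^{1/q}$ with $|X|=(X^*X)^{1/2}$; $0_{d-2}$ is the $(d-2)\times(d-2)$ zero matrix. *)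

theory Defs
  imports Jordan_Normal_Form.Schur_Decomposition Jordan_Normal_Form.Char_Poly
begin

definition mtrace :: "complex mat \<Rightarrow> complex" where
  "mtrace A = (\<Sum>i<dim_row A. A $$ (i,i))"

definition psd_mat :: "nat \<Rightarrow> complex mat \<Rightarrow> bool" where
  "psd_mat d A \<longleftrightarrow> A \<in> carrier_mat d d \<and> mat_adjoint A = A \<and>
     (\<forall>v \<in> carrier_vec d. Im ((A *\<^sub>v v) \<bullet>c v) = 0 \<and> Re ((A *\<^sub>v v) \<bullet>c v) \<ge> 0)"

definition unitary_mat :: "nat \<Rightarrow> complex mat \<Rightarrow> bool" where
  "unitary_mat d U \<longleftrightarrow> U \<in> carrier_mat d d \<and> mat_adjoint U * U = 1\<^sub>m d"

definition ui_norm :: "nat \<Rightarrow> (complex mat \<Rightarrow> real) \<Rightarrow> bool" where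
  "ui_norm d N \<longleftrightarrow>
     (\<forall>A \<in> carrier_mat d d. N A \<ge> 0 \<and> (N A = 0 \<longleftrightarrow> A = 0\<^sub>m d d)) \<and>
     (\<forall>A \<in> carrier_mat d d. \<forall>c. N (c \<cdot>\<^sub>m A) = cmod c * N A) \<and>
     (\<forall>A \<in> carrier_mat d d. \<forall>B \<in> carrier_mat d d. N (A + B) \<le> N A + N B) \<and>
     (\<forall>A \<in> carrier_mat d d. \<forall>U V. unitary_mat d U \<longrightarrow> unitary_mat d V \<longrightarrow> N (U * A * V) = N A)"

definition eigvals_mult :: "complex mat \<Rightarrow> complex list" where
  "eigvals_mult A = (SOME es. char_poly A = (\<Prod>e\<leftarrow>es. [:- e, 1:]))"

text \<open>Schatten q-(quasi-)norm: (Tr |X|^q)^(1/q), |X| = (X^* X)^(1/2); the eigenvalues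
  of X^* X are the squared singular values of X.\<close>
definition schatten :: "real \<Rightarrow> complex mat \<Rightarrow> real" where
  "schatten q X = (\<Sum>e\<leftarrow>eigvals_mult (mat_adjoint X * X). Re e powr (q/2)) powr (1/q)"

definition mat2 :: "complex \<Rightarrow> complex \<Rightarrow> complex \<Rightarrow> complex \<Rightarrow> complex mat" where
  "mat2 a b c e = mat_of_rows_list 2 [[a, b], [c, e]]"

definition dsum_zero :: "complex mat \<Rightarrow> nat \<Rightarrow> complex mat" where
  "dsum_zero M k = four_block_mat M (0\<^sub>m (dim_row M) k) (0\<^sub>m k (dim_col M)) (0\<^sub>m k k)"

end

theory Submission
  imports Defs
begin



lemma adj_carrier[simp]: "A \<in> carrier_mat n m \<Longrightarrow> mat_adjoint A \<in> carrier_mat m n"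
  unfolding mat_adjoint_def by (auto simp: mat_of_rows_def)

lemma adj_dims[simp]: "dim_row (mat_adjoint A) = dim_col A" "dim_col (mat_adjoint A) = dim_row A"
  unfolding mat_adjoint_def by (auto simp: mat_of_rows_def)

lemma adj_index[simp]: "i < dim_col A \<Longrightarrow> j < dim_row A \<Longrightarrow> mat_adjoint A $$ (i,j) = cnj (A $$ (j,i))"
  unfolding mat_adjoint_def by (auto simp: mat_of_rows_def)

lemma adj_adj[simp]: "mat_adjoint (mat_adjoint (A::complex mat)) = A"
  by (rule eq_matI, auto)

lemma mult_entry: "A \<in> carrier_mat n m \<Longrightarrow> B \<in> carrier_mat m p \<Longrightarrow> i < n \<Longrightarrow> j < p \<Longrightarrow>
  (A * B) $$ (i,j) = (\<Sum>k<m. A $$ (i,k) * B $$ (k,j))"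
  by (auto simp: scalar_prod_def lessThan_atLeast0 intro!: sum.cong)

lemma adj_mult: assumes "(A::complex mat) \<in> carrier_mat n m" "B \<in> carrier_mat m p"
  shows "mat_adjoint (A * B) = mat_adjoint B * mat_adjoint A"
proof (rule eq_matI)
  fix i j assume ij: "i < dim_row (mat_adjoint B * mat_adjoint A)" "j < dim_col (mat_adjoint B * mat_adjoint A)"
  hence i: "i < p" and j: "j < n" using assms by auto
  have "mat_adjoint (A * B) $$ (i,j) = cnj ((A*B) $$ (j,i))" using assms i j by auto
  also have "\<dots> = (\<Sum>k<m. cnj (A $$ (j,k)) * cnj (B $$ (k,i)))"
    using assms i j by (subst mult_entry[OF assms], auto simp: cnj_sum)
  also have "\<dots> = (mat_adjoint B * mat_adjoint A) $$ (i,j)"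
    using assms i j by (subst mult_entry[of _ p m _ n], auto simp: mult.commute)
  finally show "mat_adjoint (A * B) $$ (i, j) = (mat_adjoint B * mat_adjoint A) $$ (i, j)" .
qed (insert assms, auto)

lemma adj_one[simp]: "mat_adjoint (1\<^sub>m n :: complex mat) = 1\<^sub>m n"
  by (rule eq_matI, auto)

lemma adj_zero[simp]: "mat_adjoint (0\<^sub>m n m :: complex mat) = 0\<^sub>m m n"
  by (rule eq_matI, auto)

lemma adj_four_block: assumes "(A::complex mat) \<in> carrier_mat n1 m1" "B \<in> carrier_mat n1 m2"
  "C \<in> carrier_mat n2 m1" "D \<in> carrier_mat n2 m2"
  shows "mat_adjoint (four_block_mat A B C D) = four_block_mat (mat_adjoint A) (mat_adjoint C) (mat_adjoint B) (mat_adjoint D)"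
  by (rule eq_matI, insert assms, auto)

lemma unitary_right: assumes "unitary_mat n U" shows "U * mat_adjoint U = 1\<^sub>m n"
  using assms mat_mult_left_right_inverse[of "mat_adjoint U" n U] unfolding unitary_mat_def by auto

lemma unitary_adj: assumes "unitary_mat n U" shows "unitary_mat n (mat_adjoint U)"
  using assms unitary_right[OF assms] unfolding unitary_mat_def by auto

lemma unitary_mult: assumes "unitary_mat n U" "unitary_mat n V" shows "unitary_mat n (U * V)"
proof -
  have c: "U \<in> carrier_mat n n" "V \<in> carrier_mat n n" using assms unfolding unitary_mat_def by auto
  have "mat_adjoint (U * V) * (U * V) = (mat_adjoint V * mat_adjoint U) * (U * V)"
    using c by (simp add: adj_mult)
  also have "\<dots> = mat_adjoint V * ((mat_adjoint U * U) * V)"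
  proof -
    have a: "mat_adjoint V \<in> carrier_mat n n" "mat_adjoint U \<in> carrier_mat n n" using c by auto
    show ?thesis using a c by (simp add: assoc_mult_mat[of _ n n _ n _ n])
  qed
  also have "\<dots> = 1\<^sub>m n" using assms c unfolding unitary_mat_def by auto
  finally show ?thesis using c unfolding unitary_mat_def by auto
qed




lemma cinner_entry: "w \<in> carrier_vec n \<Longrightarrow> u \<in> carrier_vec n \<Longrightarrow> w \<bullet>c u = (\<Sum>k<n. w$k * cnj (u$k))"
  unfolding scalar_prod_def
  by (auto simp: lessThan_atLeast0 intro!: sum.cong)

lemma cinner_self: assumes "w \<in> carrier_vec n" shows "w \<bullet>c w = of_real (\<Sum>k<n. (cmod (w$k))^2)"
proof -
  have "w \<bullet>c w = (\<Sum>k<n. w$k * cnj (w$k))" using cinner_entry[OF assms assms] .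
  also have "\<dots> = (\<Sum>k<n. complex_of_real ((cmod (w$k))^2))"
    by (simp only: complex_norm_square)
  also have "\<dots> = of_real (\<Sum>k<n. (cmod (w$k))^2)" by (simp only: of_real_sum)
  finally show ?thesis .
qed

lemma orthonormal_completion:
  assumes v: "v \<in> carrier_vec n" and v0: "v \<noteq> 0\<^sub>v n"
  shows "\<exists>W c. unitary_mat n W \<and> (\<forall>a<n. W $$ (a,0) = c * v $ a)"
proof -
  interpret cof_vec_space n "TYPE(complex)" .
  define b where "b = basis_completion v"
  define ws where "ws = gram_schmidt n b"
  from basis_completion[OF v v0, folded b_def]
  have dist_b: "distinct b" 
    and indep: "\<not> lin_dep (set b)" and b: "set b \<subseteq> carrier_vec n" and hdb: "hd b = v" 
    and len_b: "length b = n" by auto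
  have n: "n \<noteq> 0" using v v0 by (cases n, auto)
  from hdb len_b n obtain vs where bv: "b = v # vs" by (cases b, auto)
  from gram_schmidt_result[OF b dist_b indep refl, folded ws_def]
  have ws: "set ws \<subseteq> carrier_vec n" "corthogonal ws" "length ws = n" 
    by (auto simp: len_b)
  from gram_schmidt_hd[OF v, of vs, folded bv] have hdws: "hd ws = v" unfolding ws_def .
  define S where "S = (\<lambda>j. (\<Sum>k<n. (cmod (ws ! j $ k))^2))"
  define c where "c = (\<lambda>j. 1 / sqrt (S j))"
  define W where "W = mat n n (\<lambda>(a,j). complex_of_real (c j) * ws ! j $ a)"
  have wsc: "j < n \<Longrightarrow> ws ! j \<in> carrier_vec n" for j using ws by auto
  have Spos: "S j > 0" if j: "j < n" for j
  proof -
    have "ws ! j \<bullet>c ws ! j \<noteq> 0" using corthogonalD[OF ws(2), of j j] j ws(3) by auto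
    hence "S j \<noteq> 0" using cinner_self[OF wsc[OF j]] unfolding S_def by (metis of_real_0)
    moreover have "S j \<ge> 0" unfolding S_def by (auto intro: sum_nonneg)
    ultimately show ?thesis by auto
  qed
  have Wc: "W \<in> carrier_mat n n" unfolding W_def by auto
  have "mat_adjoint W * W = 1\<^sub>m n"
  proof (rule eq_matI)
    fix i j assume "i < dim_row (1\<^sub>m n)" "j < dim_col (1\<^sub>m n)"
    hence i: "i < n" and j: "j < n" by auto
    have "(mat_adjoint W * W) $$ (i,j) = (\<Sum>k<n. cnj (W $$ (k,i)) * W $$ (k,j))"
      using Wc i j by (subst mult_entry[of _ n n _ n], auto)
    also have "\<dots> = complex_of_real (c i * c j) * (\<Sum>k<n. ws ! j $ k * cnj (ws ! i $ k))"
      using i j unfolding W_def by (auto simp: sum_distrib_left intro!: sum.cong)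
    also have "(\<Sum>k<n. ws ! j $ k * cnj (ws ! i $ k)) = ws ! j \<bullet>c ws ! i"
      using cinner_entry[OF wsc[OF j] wsc[OF i]] by simp
    also have "complex_of_real (c i * c j) * (ws ! j \<bullet>c ws ! i) = 1\<^sub>m n $$ (i,j)"
    proof (cases "i = j")
      case True
      have "complex_of_real (c i * c i) * (ws ! i \<bullet>c ws ! i) = complex_of_real (c i * c i * S i)"
        using cinner_self[OF wsc[OF i]] unfolding S_def by simp
      also have "c i * c i * S i = 1" using Spos[OF i] unfolding c_def
        by (simp add: field_simps)
      finally show ?thesis using True i by simp
    next
      case False
      hence "ws ! j \<bullet>c ws ! i = 0" using corthogonalD[OF ws(2), of j i] i j ws(3) by auto
      thus ?thesis using False i j by simp
    qed
    finally show "(mat_adjoint W * W) $$ (i,j) = 1\<^sub>m n $$ (i,j)" .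
  qed (insert Wc, auto)
  hence "unitary_mat n W" using Wc unfolding unitary_mat_def by auto
  moreover have "\<forall>a<n. W $$ (a,0) = complex_of_real (c 0) * v $ a"
    using hdws n ws(3) unfolding W_def by (cases ws, auto)
  ultimately show ?thesis by blast
qed




lemma sq_mult_carrier: "A \<in> carrier_mat n n \<Longrightarrow> B \<in> carrier_mat n n \<Longrightarrow> A * B \<in> carrier_mat n n"
  by auto

lemma sq_adj_carrier: "A \<in> carrier_mat n n \<Longrightarrow> mat_adjoint A \<in> carrier_mat n n"
  by auto


lemma uschur:
  fixes A :: "complex mat"
  assumes "A \<in> carrier_mat n n" "char_poly A = (\<Prod>e\<leftarrow>es. [:-e,1:])"
  shows "\<exists>U T. unitary_mat n U \<and> T \<in> carrier_mat n n \<and> upper_triangular T \<and> A = U * T * mat_adjoint U"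
  using assms
proof (induct es arbitrary: n A)
  case Nil
  with degree_monic_char_poly[of A n] have n: "n = 0" by auto
  show ?case
    by (rule exI[of _ "1\<^sub>m 0"], rule exI[of _ A], insert Nil n,
      auto simp: unitary_mat_def upper_triangular_def intro!: eq_matI)
next
  case (Cons e es n A)
  from Cons have A: "A \<in> carrier_mat n n" by auto
  let ?cp = "char_poly A"
  from Cons(3)
  have cp: "?cp = [: -e, 1 :] * (\<Prod>e \<leftarrow> es. [:- e, 1:])" by auto
  have mon: "monic (\<Prod>e\<leftarrow> es. [:- e, 1:])" by (rule monic_prod_list, auto)
  have deg: "degree ?cp = Suc (degree (\<Prod>e\<leftarrow> es. [:- e, 1:]))" unfolding cp
    by (subst degree_mult_eq, insert mon, auto)
  with degree_monic_char_poly[OF A] have n: "n \<noteq> 0" by auto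
  then obtain n1 where n1: "n = Suc n1" by (cases n, auto)
  have e: "eigenvalue A e" 
    unfolding eigenvalue_root_char_poly[OF A] cp by simp
  define v where "v = find_eigenvector A e"
  from find_eigenvector[OF A e] have ev: "eigenvector A v e" unfolding v_def .
  from this[unfolded eigenvector_def]
  have v: "v \<in> carrier_vec n" and v0: "v \<noteq> 0\<^sub>v n" and eig: "A *\<^sub>v v = e \<cdot>\<^sub>v v" using A by auto
  from orthonormal_completion[OF v v0] obtain W c where
    W: "unitary_mat n W" and W0: "\<And>a. a < n \<Longrightarrow> W $$ (a,0) = c * v $ a" by blast
  have Wc: "W \<in> carrier_mat n n" using W unfolding unitary_mat_def by auto
  have WHc: "mat_adjoint W \<in> carrier_mat n n" using Wc by auto
  have WHW: "mat_adjoint W * W = 1\<^sub>m n" using W unfolding unitary_mat_def by auto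
  have WWH: "W * mat_adjoint W = 1\<^sub>m n" using unitary_right[OF W] .
  define A' where "A' = mat_adjoint W * A * W"
  have A'c: "A' \<in> carrier_mat n n" unfolding A'_def using A Wc by auto
  have AW0: "(A * W) $$ (a,0) = e * W $$ (a,0)" if a: "a < n" for a
  proof -
    have "(A * W) $$ (a,0) = (\<Sum>b<n. A $$ (a,b) * W $$ (b,0))"
      using A Wc a n by (subst mult_entry[of _ n n _ n], auto)
    also have "\<dots> = c * (\<Sum>b<n. A $$ (a,b) * v $ b)"
      using W0 by (auto simp: sum_distrib_left intro!: sum.cong)
    also have "(\<Sum>b<n. A $$ (a,b) * v $ b) = (A *\<^sub>v v) $ a"
      using A v a by (auto simp: scalar_prod_def lessThan_atLeast0 intro!: sum.cong)
    also have "\<dots> = e * v $ a" using eig v a by auto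
    finally show ?thesis using W0[OF a] by simp
  qed
  have col0: "A' $$ (k,0) = (if k = 0 then e else 0)" if k: "k < n" for k
  proof -
    have "A' = mat_adjoint W * (A * W)" unfolding A'_def using assoc_mult_mat[OF WHc A Wc] by auto
    hence "A' $$ (k,0) = (mat_adjoint W * (A * W)) $$ (k,0)" by simp
    also have "\<dots> = (\<Sum>a<n. mat_adjoint W $$ (k,a) * (A * W) $$ (a,0))"
      by (rule mult_entry[of _ n n _ n], insert WHc A Wc k n, auto)
    also have "\<dots> = e * (\<Sum>a<n. mat_adjoint W $$ (k,a) * W $$ (a,0))"
      using AW0 by (auto simp: sum_distrib_left intro!: sum.cong)
    also have "(\<Sum>a<n. mat_adjoint W $$ (k,a) * W $$ (a,0)) = (mat_adjoint W * W) $$ (k,0)"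
      using Wc k n by (subst mult_entry[of _ n n _ n], auto)
    also have "\<dots> = (if k = 0 then 1 else 0)" unfolding WHW using k n by auto
    finally show ?thesis by auto
  qed
  have A'A_wit: "similar_mat_wit A' A (mat_adjoint W) W"
    by (rule similar_mat_witI[of _ _ n], insert WHW WWH A'c A Wc WHc, auto simp: A'_def)
  hence A'A: "similar_mat A' A" unfolding similar_mat_def by blast
  have AA': "A = W * A' * mat_adjoint W"
  proof -
    have "W * A' * mat_adjoint W = (W * mat_adjoint W) * A * (W * mat_adjoint W)"
      unfolding A'_def using A Wc WHc by (simp add: assoc_mult_mat[of _ n n _ n _ n] sq_mult_carrier sq_adj_carrier)
    thus ?thesis using WWH A by simp
  qed
  obtain A1 A2 A0 A3 where splitA': "split_block A' 1 1 = (A1,A2,A0,A3)"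
    by (cases "split_block A' 1 1", auto)
  from A'c n1 have "dim_row A' = 1 + n1" "dim_col A' = 1 + n1" by auto
  from split_block[OF splitA' this] have A2: "A2 \<in> carrier_mat 1 n1"
    and A3: "A3 \<in> carrier_mat n1 n1" 
    and A'block: "A' = four_block_mat A1 A2 A0 A3" by auto
  have A1id: "A1 = mat 1 1 (\<lambda> _. e)"
    using splitA'[unfolded split_block_def Let_def] col0[of 0] A'c n
    by (auto intro!: eq_matI)
  have A1: "A1 \<in> carrier_mat 1 1" unfolding A1id by auto
  have A0id: "A0 = 0\<^sub>m n1 1"
    using splitA'[unfolded split_block_def Let_def] col0 A'c n1 by (auto intro!: eq_matI)
  from Cons(3) char_poly_similar[OF A'A]
  have "char_poly A' = [: -e,1 :] * (\<Prod> e \<leftarrow> es. [:- e, 1:])" by simp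
  also have "char_poly A' = char_poly A1 * char_poly A3" 
    unfolding A'block A0id
    by (rule char_poly_four_block_zeros_col[OF A1 A2 A3])
  also have "char_poly A1 = [: -e,1 :]"
    by (simp add: A1id char_poly_defs det_def sign_def)
  finally have cp3: "char_poly A3 = (\<Prod> e \<leftarrow> es. [:- e, 1:])"
    by (metis mult_cancel_left pCons_eq_0_iff zero_neq_one)
  from Cons(1)[OF A3 cp3] obtain U3 T3 where U3: "unitary_mat n1 U3" and T3: "T3 \<in> carrier_mat n1 n1"
    and ut3: "upper_triangular T3" and A3id: "A3 = U3 * T3 * mat_adjoint U3" by blast
  have U3c: "U3 \<in> carrier_mat n1 n1" using U3 unfolding unitary_mat_def by auto
  have U3H: "mat_adjoint U3 \<in> carrier_mat n1 n1" using U3c by auto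
  have U3HU3: "mat_adjoint U3 * U3 = 1\<^sub>m n1" using U3 unfolding unitary_mat_def by auto
  have U3U3H: "U3 * mat_adjoint U3 = 1\<^sub>m n1" using unitary_right[OF U3] .
  define V where "V = four_block_mat (1\<^sub>m 1) (0\<^sub>m 1 n1) (0\<^sub>m n1 1) U3"
  define T where "T = four_block_mat A1 (A2 * U3) (0\<^sub>m n1 1) T3"
  have Vc: "V \<in> carrier_mat n n" unfolding V_def n1 using U3c by auto
  have Tc: "T \<in> carrier_mat n n" unfolding T_def n1 using T3 A1 by auto
  have VH: "mat_adjoint V = four_block_mat (1\<^sub>m 1) (0\<^sub>m 1 n1) (0\<^sub>m n1 1) (mat_adjoint U3)"
    unfolding V_def by (subst adj_four_block[of _ 1 1 _ n1 _ n1], insert U3c, auto)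
  have c1: "1\<^sub>m 1 \<in> carrier_mat 1 1" "0\<^sub>m 1 n1 \<in> carrier_mat 1 n1" "(0\<^sub>m n1 1 :: complex mat) \<in> carrier_mat n1 1"
    by auto
  have "mat_adjoint V * V = 1\<^sub>m n"
    unfolding VH unfolding V_def
    by (subst mult_four_block_mat[OF c1 U3H c1 U3c],
      insert U3c U3H U3HU3, auto simp: n1)
  hence V: "unitary_mat n V" using Vc unfolding unitary_mat_def by auto
  have VT: "V * T = four_block_mat A1 (A2 * U3) (0\<^sub>m n1 1) (U3 * T3)"
    unfolding V_def T_def
    by (subst mult_four_block_mat[OF c1 U3c A1 mult_carrier_mat[OF A2 U3c] c1(3) T3],
      insert U3c A1 A2 T3, auto)
  have "V * T * mat_adjoint V = four_block_mat A1 (A2 * U3 * mat_adjoint U3) (0\<^sub>m n1 1) (U3 * T3 * mat_adjoint U3)"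
    unfolding VT VH
    by (subst mult_four_block_mat[OF A1 mult_carrier_mat[OF A2 U3c] c1(3) mult_carrier_mat[OF U3c T3] c1 U3H],
      insert U3c U3H A1 A2 T3, auto)
  also have "A2 * U3 * mat_adjoint U3 = A2" using A2 U3c U3H U3U3H
    by (simp add: assoc_mult_mat[of _ 1 n1 _ n1 _ n1])
  finally have A'VT: "A' = V * T * mat_adjoint V" unfolding A'block A0id A3id by simp
  have ut: "upper_triangular T" unfolding T_def
    by (rule upper_triangular_four_block[OF A1 T3 _ ut3], auto simp: A1id upper_triangular_def)
  have "A = (W * V) * T * mat_adjoint (W * V)"
  proof -
    have "A = W * (V * T * mat_adjoint V) * mat_adjoint W" using AA' A'VT by simp
    also have "\<dots> = (W * V) * T * (mat_adjoint V * mat_adjoint W)"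
      using Wc WHc Vc Tc by (simp add: assoc_mult_mat[of _ n n _ n _ n] sq_mult_carrier sq_adj_carrier)
    also have "mat_adjoint V * mat_adjoint W = mat_adjoint (W * V)"
      using Wc Vc by (simp add: adj_mult)
    finally show ?thesis .
  qed
  moreover have "unitary_mat n (W * V)" using unitary_mult[OF W V] .
  ultimately show ?case using Tc ut by blast
qed

definition diagm :: "nat \<Rightarrow> (nat \<Rightarrow> real) \<Rightarrow> complex mat" where
  "diagm n x = mat n n (\<lambda>(i,j). if i = j then complex_of_real (x i) else 0)"

lemma diagm_carrier[simp]: "diagm n x \<in> carrier_mat n n"
  unfolding diagm_def by auto

lemma diagm_index[simp]: "i < n \<Longrightarrow> j < n \<Longrightarrow> diagm n x $$ (i,j) = (if i = j then complex_of_real (x i) else 0)"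
  unfolding diagm_def by auto

lemma diagm_dims[simp]: "dim_row (diagm n x) = n" "dim_col (diagm n x) = n"
  unfolding diagm_def by auto

lemma spectral:
  fixes A :: "complex mat"
  assumes A: "A \<in> carrier_mat n n" and herm: "mat_adjoint A = A"
  shows "\<exists>U x. unitary_mat n U \<and> A = U * diagm n x * mat_adjoint U"
proof -
  from char_poly_factorized[OF A] obtain es where "char_poly A = (\<Prod>e\<leftarrow>es. [:-e,1:])" by blast
  from uschur[OF A this] obtain U T where U: "unitary_mat n U" and Tc: "T \<in> carrier_mat n n"
    and ut: "upper_triangular T" and AT: "A = U * T * mat_adjoint U" by blast
  have Uc: "U \<in> carrier_mat n n" using U unfolding unitary_mat_def by auto
  have UH: "mat_adjoint U \<in> carrier_mat n n" using Uc by auto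
  have UHU: "mat_adjoint U * U = 1\<^sub>m n" using U unfolding unitary_mat_def by auto
  have TA: "T = mat_adjoint U * A * U"
  proof -
    have "mat_adjoint U * A * U = (mat_adjoint U * U) * T * (mat_adjoint U * U)"
      unfolding AT using Uc UH Tc by (simp add: assoc_mult_mat[of _ n n _ n _ n] sq_mult_carrier sq_adj_carrier)
    thus ?thesis unfolding UHU using Tc by simp
  qed
  have TH: "mat_adjoint T = T"
  proof -
    have "mat_adjoint T = mat_adjoint U * mat_adjoint A * mat_adjoint (mat_adjoint U)"
      unfolding TA using Uc UH A by (simp add: adj_mult[of _ n n _ n] assoc_mult_mat[of _ n n _ n _ n] sq_mult_carrier sq_adj_carrier)
    thus ?thesis using TA herm by simp
  qed
  define x where "x = (\<lambda>i. Re (T $$ (i,i)))"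
  have "T = diagm n x"
  proof (rule eq_matI)
    fix i j assume "i < dim_row (diagm n x)" "j < dim_col (diagm n x)"
    hence i: "i < n" and j: "j < n" by auto
    show "T $$ (i,j) = diagm n x $$ (i,j)"
    proof (cases "i = j")
      case True
      have "T $$ (i,i) = cnj (T $$ (i,i))" using arg_cong[OF TH, of "\<lambda>M. M $$ (i,i)"] i Tc by auto
      hence "Im (T $$ (i,i)) = 0" by (metis cnj.simps(2) neg_equal_zero)
      thus ?thesis using True i unfolding x_def by (simp add: complex_eq_iff)
    next
      case False
      have s: "T $$ (i,j) = cnj (T $$ (j,i))" using arg_cong[OF TH, of "\<lambda>M. M $$ (i,j)"] i j Tc by auto
      show ?thesis
      proof (cases "j < i")
        case True thus ?thesis using ut i j False Tc unfolding upper_triangular_def by auto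
      next
        case False
        hence "i < j" using \<open>i \<noteq> j\<close> by auto
        hence "T $$ (j,i) = 0" using ut i j Tc unfolding upper_triangular_def by auto
        thus ?thesis using s \<open>i \<noteq> j\<close> i j by simp
      qed
    qed
  qed (insert Tc, auto)
  thus ?thesis using U AT by blast
qed




lemma fill:
  fixes \<Phi> :: "(nat \<Rightarrow> real) \<Rightarrow> real"
  assumes T: "\<And>x i j a b A B. i < d \<Longrightarrow> j < d \<Longrightarrow> i \<noteq> j \<Longrightarrow> 0 \<le> B \<Longrightarrow> B \<le> a \<Longrightarrow> a \<le> A
     \<Longrightarrow> a + b = A + B \<Longrightarrow> \<Phi> (x(i:=a, j:=b)) \<le> \<Phi> (x(i:=A, j:=B))"
  and p: "p < d" and S: "S \<subseteq> {..<d}" "p \<notin> S"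
  shows "0 \<le> x p \<Longrightarrow> x p \<le> c \<Longrightarrow> (\<forall>j\<in>S. 0 \<le> x j \<and> x j \<le> c) \<Longrightarrow> c \<le> x p + sum x S \<Longrightarrow>
    \<exists>x'. x' p = c \<and> (\<forall>k. k \<notin> S \<longrightarrow> k \<noteq> p \<longrightarrow> x' k = x k) \<and> (\<forall>j\<in>S. 0 \<le> x' j \<and> x' j \<le> c)
      \<and> x' p + sum x' S = x p + sum x S \<and> \<Phi> x \<le> \<Phi> x'"
proof (induction "card {j\<in>S. 0 < x j}" arbitrary: x rule: less_induct)
  case (less x)
  have finS: "finite S" using S finite_subset by blast
  show ?case
  proof (cases "x p = c")
    case True
    thus ?thesis using less.prems by blast
  next
    case False
    hence xpc: "x p < c" using less.prems by auto
    hence "0 < sum x S" using less.prems by auto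
    then obtain j where j: "j \<in> S" and xj: "0 < x j"
      by (metis (no_types, lifting) not_less sum_nonpos)
    have jd: "j < d" and jp: "j \<noteq> p" using j S by auto
    define a where "a = x p"
    define b where "b = x j"
    define A where "A = min c (a + b)"
    define B where "B = a + b - A"
    define x1 where "x1 = x(p := A, j := B)"
    have ab: "0 \<le> a" "a \<le> c" "0 \<le> b" "b \<le> c" using less.prems j unfolding a_def b_def by auto
    have AB: "0 \<le> B" "B \<le> a" "a \<le> A" "a + b = A + B" "A \<le> c" "B \<le> c"
      using ab unfolding A_def B_def by auto
    have "\<Phi> (x(p := a, j := b)) \<le> \<Phi> (x(p := A, j := B))"
      by (rule T[OF p jd jp[symmetric] AB(1-4)])
    hence P1: "\<Phi> x \<le> \<Phi> x1" unfolding x1_def a_def b_def by simp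
    have x1p: "x1 p = A" and x1j: "x1 j = B" and x1o: "\<And>k. k \<noteq> p \<Longrightarrow> k \<noteq> j \<Longrightarrow> x1 k = x k"
      unfolding x1_def using jp by auto
    have sumS: "sum x S = b + sum x (S - {j})" "sum x1 S = B + sum x1 (S - {j})"
      unfolding b_def x1j[symmetric] by (rule sum.remove[OF finS j])+
    have sumR: "sum x1 (S - {j}) = sum x (S - {j})"
    proof (rule sum.cong)
      fix k assume k: "k \<in> S - {j}"
      hence "k \<noteq> p" using S(2) by auto
      thus "x1 k = x k" using x1o k by auto
    qed simp
    have sum1: "x1 p + sum x1 S = x p + sum x S"
      using sumS sumR x1p AB(4) unfolding a_def by simp
    have bnd1: "\<forall>j\<in>S. 0 \<le> x1 j \<and> x1 j \<le> c"
    proof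
      fix k assume k: "k \<in> S"
      show "0 \<le> x1 k \<and> x1 k \<le> c"
      proof (cases "k = j")
        case True thus ?thesis using x1j AB by simp
      next
        case False
        moreover have "k \<noteq> p" using k S(2) by auto
        ultimately have "x1 k = x k" using x1o by blast
        thus ?thesis using less.prems(3) k by auto
      qed
    qed
    show ?thesis
    proof (cases "A = c")
      case True
      have o: "\<forall>k. k \<notin> S \<longrightarrow> k \<noteq> p \<longrightarrow> x1 k = x k"
      proof (intro allI impI)
        fix k assume "k \<notin> S" "k \<noteq> p"
        moreover hence "k \<noteq> j" using j by auto
        ultimately show "x1 k = x k" using x1o by metis
      qed
      show ?thesis using True x1p o sum1 bnd1 P1 by (intro exI[of _ x1]) simp
    next
      case False
      hence A: "A = a + b" and B0: "B = 0" unfolding A_def B_def by auto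
      have x1S: "\<And>k. k \<in> S \<Longrightarrow> k \<noteq> j \<Longrightarrow> x1 k = x k"
      proof -
        fix k assume "k \<in> S" "k \<noteq> j"
        moreover hence "k \<noteq> p" using S(2) by auto
        ultimately show "x1 k = x k" using x1o by blast
      qed
      have sub1: "{j\<in>S. 0 < x1 j} \<subseteq> {j\<in>S. 0 < x j}"
        using x1S x1j B0 by (smt (verit) Collect_mono_iff)
      have "j \<in> {j\<in>S. 0 < x j}" "j \<notin> {j\<in>S. 0 < x1 j}" using j xj x1j B0 by auto
      hence sub: "{j\<in>S. 0 < x1 j} \<subset> {j\<in>S. 0 < x j}" using sub1 by blast
      have "card {j\<in>S. 0 < x1 j} < card {j\<in>S. 0 < x j}"
        by (rule psubset_card_mono[OF _ sub], insert finS, auto)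
      note lt = this
      have h1: "0 \<le> x1 p" "x1 p \<le> c" unfolding x1p using AB(3,5) ab(1) by linarith+
      have h4: "c \<le> x1 p + sum x1 S" using sum1 less.prems(4) by linarith
      from less.hyps[of x1, OF lt h1 bnd1 h4] obtain x' where
        x': "x' p = c" "\<forall>k. k \<notin> S \<longrightarrow> k \<noteq> p \<longrightarrow> x' k = x1 k" "\<forall>j\<in>S. 0 \<le> x' j \<and> x' j \<le> c"
          "x' p + sum x' S = x1 p + sum x1 S" "\<Phi> x1 \<le> \<Phi> x'"
        by blast
      have o: "\<forall>k. k \<notin> S \<longrightarrow> k \<noteq> p \<longrightarrow> x' k = x k"
      proof (intro allI impI)
        fix k assume "k \<notin> S" "k \<noteq> p"
        moreover hence "k \<noteq> j" using j by auto
        ultimately show "x' k = x k" using x'(2) x1o by metis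
      qed
      have "\<Phi> x \<le> \<Phi> x'" using P1 x'(5) by linarith
      thus ?thesis using x'(1,3,4) o sum1 by (intro exI[of _ x']) simp
    qed
  qed
qed

lemma major:
  fixes \<Phi> :: "(nat \<Rightarrow> real) \<Rightarrow> real"
  assumes T: "\<And>x i j a b A B. i < d \<Longrightarrow> j < d \<Longrightarrow> i \<noteq> j \<Longrightarrow> 0 \<le> B \<Longrightarrow> B \<le> a \<Longrightarrow> a \<le> A
     \<Longrightarrow> a + b = A + B \<Longrightarrow> \<Phi> (x(i:=a, j:=b)) \<le> \<Phi> (x(i:=A, j:=B))"
  and E: "\<And>x z. (\<forall>k<d. x k = z k) \<Longrightarrow> \<Phi> x = \<Phi> z"
  and p: "p1 < d" "p2 < d" "p1 \<noteq> p2" and c: "0 \<le> c2" "c2 \<le> c1"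
  and x: "\<forall>k<d. 0 \<le> x k \<and> x k \<le> c1" and sx: "sum x {..<d} = c1 + c2"
  shows "\<Phi> x \<le> \<Phi> (\<lambda>k. if k = p1 then c1 else if k = p2 then c2 else 0)"
proof -
  define S1 where "S1 = {..<d} - {p1}"
  have S1: "S1 \<subseteq> {..<d}" "p1 \<notin> S1" "p2 \<in> S1" unfolding S1_def using p by auto
  have "sum x {..<d} = x p1 + sum x S1" unfolding S1_def by (rule sum.remove, insert p, auto)
  hence sx1: "x p1 + sum x S1 = c1 + c2" using sx by simp
  have b1: "\<forall>j\<in>S1. 0 \<le> x j \<and> x j \<le> c1" using x S1(1) by blast
  have x1p: "0 \<le> x p1" "x p1 \<le> c1" using x p(1) by auto
  have c1le: "c1 \<le> x p1 + sum x S1" using sx1 c by linarith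
  have "\<exists>x'. x' p1 = c1 \<and> (\<forall>k. k \<notin> S1 \<longrightarrow> k \<noteq> p1 \<longrightarrow> x' k = x k) \<and> (\<forall>j\<in>S1. 0 \<le> x' j \<and> x' j \<le> c1)
      \<and> x' p1 + sum x' S1 = x p1 + sum x S1 \<and> \<Phi> x \<le> \<Phi> x'"
    by (rule fill[where \<Phi>=\<Phi> and d=d, OF T p(1) S1(1,2) x1p b1 c1le])
  then obtain x' where
    x': "x' p1 = c1" "\<forall>k. k \<notin> S1 \<longrightarrow> k \<noteq> p1 \<longrightarrow> x' k = x k" "\<forall>j\<in>S1. 0 \<le> x' j \<and> x' j \<le> c1"
      "x' p1 + sum x' S1 = x p1 + sum x S1" "\<Phi> x \<le> \<Phi> x'"
    by blast
  define S2 where "S2 = S1 - {p2}"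
  have S2: "S2 \<subseteq> {..<d}" "p2 \<notin> S2" "p1 \<notin> S2" "S2 \<subseteq> S1" unfolding S2_def using S1 by auto
  have finS1: "finite S1" using S1(1) finite_subset by blast
  have S1S2: "sum x' S1 = x' p2 + sum x' S2"
    unfolding S2_def by (rule sum.remove[OF finS1 S1(3)])
  have sx2: "x' p2 + sum x' S2 = c2" using S1S2 x'(1,4) sx1 by simp
  have S2nn: "0 \<le> sum x' S2" using x'(3) S2(4) by (meson subsetD sum_nonneg)
  have x'p2: "0 \<le> x' p2" "x' p2 \<le> c2" using x'(3) S1(3) sx2 S2nn by auto
  have bnd: "\<forall>j\<in>S2. 0 \<le> x' j \<and> x' j \<le> c2"
  proof
    fix j assume j: "j \<in> S2"
    have fS2: "finite S2" using S2(4) finS1 finite_subset by blast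
    have nn: "\<forall>i\<in>S2. 0 \<le> x' i" using x'(3) S2(4) by blast
    have "x' j \<le> sum x' S2" 
      by (rule member_le_sum[OF j _ fS2], insert nn, auto)
    moreover have "sum x' S2 \<le> c2" using sx2 x'p2 by linarith
    moreover have "0 \<le> x' j" using j nn by auto
    ultimately show "0 \<le> x' j \<and> x' j \<le> c2" by linarith
  qed
  have c2le: "c2 \<le> x' p2 + sum x' S2" using sx2 by linarith
  have "\<exists>x''. x'' p2 = c2 \<and> (\<forall>k. k \<notin> S2 \<longrightarrow> k \<noteq> p2 \<longrightarrow> x'' k = x' k) \<and> (\<forall>j\<in>S2. 0 \<le> x'' j \<and> x'' j \<le> c2)
      \<and> x'' p2 + sum x'' S2 = x' p2 + sum x' S2 \<and> \<Phi> x' \<le> \<Phi> x''"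
    by (rule fill[where \<Phi>=\<Phi> and d=d, OF T p(2) S2(1,2) x'p2 bnd c2le])
  then obtain x'' where
    x'': "x'' p2 = c2" "\<forall>k. k \<notin> S2 \<longrightarrow> k \<noteq> p2 \<longrightarrow> x'' k = x' k" "\<forall>j\<in>S2. 0 \<le> x'' j \<and> x'' j \<le> c2"
      "x'' p2 + sum x'' S2 = x' p2 + sum x' S2" "\<Phi> x' \<le> \<Phi> x''"
    by blast
  have fS2: "finite S2" using S2(4) finS1 finite_subset by blast
  have "sum x'' S2 = 0" using x''(1,4) sx2 by simp
  hence z: "\<forall>j\<in>S2. x'' j = 0"
    using x''(3) sum_nonneg_eq_0_iff[OF fS2, of x''] by auto
  have x''p1: "x'' p1 = c1" using x''(2) S2(3) p(3) x'(1) by auto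
  have "\<Phi> x'' = \<Phi> (\<lambda>k. if k = p1 then c1 else if k = p2 then c2 else 0)"
  proof (rule E, intro allI impI)
    fix k assume k: "k < d"
    show "x'' k = (if k = p1 then c1 else if k = p2 then c2 else 0)"
    proof (cases "k = p1 \<or> k = p2")
      case True thus ?thesis using x''p1 x''(1) p(3) by auto
    next
      case False
      hence "k \<in> S2" using k unfolding S2_def S1_def by auto
      thus ?thesis using z False by auto
    qed
  qed
  thus ?thesis using x'(5) x''(5) by simp
qed




lemma exp_bern:
  fixes q L :: real assumes q: "0 < q" "q \<le> 1"
  shows "exp (q * L) \<le> 1 - q + q * exp L"
proof -
  define \<phi> where "\<phi> = (\<lambda>L. 1 - q + q * exp L - exp (q * L))"
  have der: "DERIV \<phi> x :> q * exp x - q * exp (q * x)" for x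
    unfolding \<phi>_def by (auto intro!: derivative_eq_intros)
  have "\<phi> 0 \<le> \<phi> L"
  proof (cases "0 \<le> L")
    case True
    show ?thesis
    proof (rule DERIV_nonneg_imp_nondecreasing[OF True])
      fix x assume x: "0 \<le> x" "x \<le> L"
      have "q * x \<le> x" using x q by (simp add: mult_left_le_one_le)
      hence "exp (q * x) \<le> exp x" by simp
      hence "q * exp x - q * exp (q * x) \<ge> 0" using q by (simp add: algebra_simps)
      thus "\<exists>y. DERIV \<phi> x :> y \<and> 0 \<le> y" using der by blast
    qed
  next
    case False
    hence L: "L \<le> 0" by simp
    show ?thesis
    proof (rule DERIV_nonpos_imp_nonincreasing[OF L])
      fix x assume x: "L \<le> x" "x \<le> 0"
      have "x \<le> q * x" using x q by (simp add: mult_le_cancel_right1 mult_left_le_one_le)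
      hence "exp x \<le> exp (q * x)" by simp
      hence "q * exp x - q * exp (q * x) \<le> 0" using q by (simp add: algebra_simps)
      thus "\<exists>y. DERIV \<phi> x :> y \<and> y \<le> 0" using der by blast
    qed
  qed
  thus ?thesis unfolding \<phi>_def by simp
qed

lemma powr_bern:
  fixes q r :: real assumes q: "0 < q" "q \<le> 1" and r: "0 \<le> r"
  shows "r powr q \<le> 1 + q * (r - 1)"
proof (cases "r = 0")
  case True thus ?thesis using q by simp
next
  case False
  hence r: "r > 0" using r by simp
  have "r powr q = exp (q * ln r)" using r by (simp add: powr_def mult.commute)
  also have "\<dots> \<le> 1 - q + q * exp (ln r)" by (rule exp_bern[OF q])
  also have "\<dots> = 1 + q * (r - 1)" using r by (simp add: algebra_simps)
  finally show ?thesis .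
qed

lemma powr_concave:
  fixes q u v t :: real assumes q: "0 < q" "q \<le> 1" and uv: "0 \<le> u" "0 \<le> v" and t: "0 \<le> t" "t \<le> 1"
  shows "t * u powr q + (1 - t) * v powr q \<le> (t * u + (1 - t) * v) powr q"
proof -
  define w where "w = t * u + (1 - t) * v"
  have w0: "0 \<le> w" unfolding w_def using uv t by auto
  show ?thesis
  proof (cases "w = 0")
    case True
    have tu: "t * u = 0" and tv: "(1 - t) * v = 0" using True uv t unfolding w_def
      by (smt (verit) mult_nonneg_nonneg)+
    have z1: "t * u powr q = 0" using tu by (cases "t = 0") auto
    have z2: "(1 - t) * v powr q = 0" using tv by (cases "t = 1") auto
    have "(t * u + (1 - t) * v) powr q = 0" using True unfolding w_def by simp
    thus ?thesis using z1 z2 by linarith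
  next
    case False
    hence w: "w > 0" using w0 by simp
    have b: "x powr q \<le> w powr q * (1 + q * (x / w - 1))" if x: "0 \<le> x" for x
    proof -
      have "x powr q = w powr q * (x / w) powr q" using x w by (simp add: powr_divide)
      also have "\<dots> \<le> w powr q * (1 + q * (x / w - 1))"
        by (rule mult_left_mono[OF powr_bern[OF q]], insert x w, auto)
      finally show ?thesis .
    qed
    have "t * u powr q + (1 - t) * v powr q \<le> t * (w powr q * (1 + q * (u / w - 1))) + (1 - t) * (w powr q * (1 + q * (v / w - 1)))"
      by (rule add_mono; rule mult_left_mono[OF b], insert uv t, auto)
    also have "\<dots> = w powr q * (1 + q * ((t * u + (1 - t) * v) / w - 1))"
      by (simp add: algebra_simps add_divide_distrib diff_divide_distrib)
    also have "\<dots> = w powr q" unfolding w_def[symmetric] using w by simp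
    finally show ?thesis unfolding w_def .
  qed
qed

lemma powr_pair:
  fixes q a b A B :: real assumes q: "0 < q" "q \<le> 1" and ab: "0 \<le> B" "B \<le> a" "a \<le> A" "a + b = A + B"
  shows "A powr q + B powr q \<le> a powr q + b powr q"
proof (cases "A = B")
  case True thus ?thesis using ab by auto
next
  case False
  hence AB: "B < A" using ab by auto
  define t where "t = (a - B) / (A - B)"
  have t: "0 \<le> t" "t \<le> 1" unfolding t_def using ab AB by auto
  have h: "t * (A - B) = a - B" unfolding t_def using AB by simp
  have a: "a = t * A + (1 - t) * B" using h by (simp add: algebra_simps)
  have b: "b = (1 - t) * A + t * B" using a ab by (simp add: algebra_simps)
  have "t * A powr q + (1 - t) * B powr q \<le> a powr q"
    unfolding a by (rule powr_concave[OF q _ _ t], insert ab, auto)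
  moreover have "(1 - t) * A powr q + (1 - (1 - t)) * B powr q \<le> b powr q"
    unfolding b using powr_concave[OF q _ _, of A B "1 - t"] t ab by auto
  ultimately show ?thesis by (simp add: algebra_simps)
qed

lemma cs_sum:
  fixes u v :: "nat \<Rightarrow> real"
  shows "(\<Sum>i\<in>I. u i * v i)^2 \<le> (\<Sum>i\<in>I. (u i)^2) * (\<Sum>i\<in>I. (v i)^2)"
proof (cases "finite I")
  case fin: True
  have "(\<Sum>i\<in>I. u i * v i)^2 = (\<Sum>i\<in>I. \<Sum>j\<in>I. (u i * v i) * (u j * v j))"
    by (simp add: power2_eq_square sum_product)
  hence "2 * (\<Sum>i\<in>I. u i * v i)^2 = (\<Sum>i\<in>I. \<Sum>j\<in>I. 2 * (u i * v i) * (u j * v j))"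
    by (simp add: sum_distrib_left mult.assoc)
  also have "\<dots> \<le> (\<Sum>i\<in>I. \<Sum>j\<in>I. (u i)^2 * (v j)^2 + (u j)^2 * (v i)^2)"
  proof (rule sum_mono, rule sum_mono)
    fix i j
    have "0 \<le> (u i * v j - u j * v i)^2" by simp
    thus "2 * (u i * v i) * (u j * v j) \<le> (u i)^2 * (v j)^2 + (u j)^2 * (v i)^2"
      by (simp add: power2_eq_square algebra_simps)
  qed
  also have "\<dots> = (\<Sum>i\<in>I. \<Sum>j\<in>I. (u i)^2 * (v j)^2) + (\<Sum>i\<in>I. \<Sum>j\<in>I. (u j)^2 * (v i)^2)"
    by (simp add: sum.distrib)
  also have "(\<Sum>i\<in>I. \<Sum>j\<in>I. (u j)^2 * (v i)^2) = (\<Sum>i\<in>I. \<Sum>j\<in>I. (u i)^2 * (v j)^2)"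
    by (subst sum.swap, simp add: mult.commute)
  also have "(\<Sum>i\<in>I. \<Sum>j\<in>I. (u i)^2 * (v j)^2) = (\<Sum>i\<in>I. (u i)^2) * (\<Sum>i\<in>I. (v i)^2)"
    by (simp add: sum_product)
  finally show ?thesis by simp
qed simp




definition qf :: "nat \<Rightarrow> complex mat \<Rightarrow> (nat \<Rightarrow> complex) \<Rightarrow> (nat \<Rightarrow> complex) \<Rightarrow> complex" where
  "qf n A f g = (\<Sum>i<n. \<Sum>j<n. cnj (f i) * A $$ (i,j) * g j)"

lemma psd_qf: assumes "psd_mat n A" shows "Im (qf n A f f) = 0 \<and> 0 \<le> Re (qf n A f f)"
proof -
  have A: "A \<in> carrier_mat n n" using assms unfolding psd_mat_def by auto
  define v where "v = vec n f"
  have v: "v \<in> carrier_vec n" unfolding v_def by auto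
  have "(A *\<^sub>v v) \<bullet>c v = (\<Sum>i<n. (A *\<^sub>v v) $ i * cnj (v $ i))"
    using cinner_entry[of "A *\<^sub>v v" n v] A v by auto
  also have "\<dots> = (\<Sum>i<n. (\<Sum>j<n. A $$ (i,j) * f j) * cnj (f i))"
    using A unfolding v_def by (auto simp: scalar_prod_def lessThan_atLeast0 intro!: sum.cong)
  also have "\<dots> = qf n A f f" unfolding qf_def
    by (auto simp: sum_distrib_right intro!: sum.cong)
  finally have "(A *\<^sub>v v) \<bullet>c v = qf n A f f" .
  thus ?thesis using assms v unfolding psd_mat_def by metis
qed

lemma herm_entry: assumes "A \<in> carrier_mat n n" "mat_adjoint A = A" "i < n" "j < n"
  shows "cnj (A $$ (i,j)) = A $$ (j,i)"
proof -
  have "mat_adjoint A $$ (j,i) = cnj (A $$ (i,j))" by (rule adj_index, insert assms(1,3,4), auto)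
  hence "A $$ (j,i) = cnj (A $$ (i,j))" unfolding assms(2) .
  thus ?thesis by simp
qed

lemma herm_qf: assumes A: "A \<in> carrier_mat n n" "mat_adjoint A = A"
  shows "qf n A g f = cnj (qf n A f g)"
proof -
  have "cnj (qf n A f g) = (\<Sum>i<n. \<Sum>j<n. f i * A $$ (j,i) * cnj (g j))"
    unfolding qf_def using herm_entry[OF A] by (auto simp: cnj_sum intro!: sum.cong)
  also have "\<dots> = (\<Sum>j<n. \<Sum>i<n. f i * A $$ (j,i) * cnj (g j))" by (rule sum.swap)
  also have "\<dots> = qf n A g f" unfolding qf_def by (auto intro!: sum.cong)
  finally show ?thesis by simp
qed

lemma qf_expand: "qf n A (\<lambda>i. f i + l * g i) (\<lambda>i. f i + l * g i) =
   qf n A f f + l * qf n A f g + cnj l * qf n A g f + cnj l * l * qf n A g g"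
  unfolding qf_def by (simp add: algebra_simps sum.distrib sum_distrib_left)

lemma qf_cs: assumes psd: "psd_mat n A"
  shows "(cmod (qf n A f g))^2 \<le> Re (qf n A f f) * Re (qf n A g g)"
proof -
  have A: "A \<in> carrier_mat n n" "mat_adjoint A = A" using psd unfolding psd_mat_def by auto
  define b where "b = qf n A f g"
  define a where "a = Re (qf n A f f)"
  define c where "c = Re (qf n A g g)"
  define B where "B = (cmod b)^2"
  have a0: "0 \<le> a" and c0: "0 \<le> c" using psd_qf[OF psd] unfolding a_def c_def by auto
  have aa: "qf n A f f = of_real a" using psd_qf[OF psd, of f] unfolding a_def by (simp add: complex_eq_iff)
  have cc: "qf n A g g = of_real c" using psd_qf[OF psd, of g] unfolding c_def by (simp add: complex_eq_iff)
  have gf: "qf n A g f = cnj b" unfolding b_def by (rule herm_qf[OF A])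
  have key: "0 \<le> a - 2 * t * B + t^2 * B * c" for t :: real
  proof -
    define l where "l = - (complex_of_real t) * cnj b"
    have "0 \<le> Re (qf n A (\<lambda>i. f i + l * g i) (\<lambda>i. f i + l * g i))" using psd_qf[OF psd] by blast
    also have "qf n A (\<lambda>i. f i + l * g i) (\<lambda>i. f i + l * g i) = of_real a + l * b + cnj l * cnj b + cnj l * l * of_real c"
      unfolding qf_expand aa cc gf b_def ..
    also have "Re \<dots> = a - 2 * t * B + t^2 * B * c"
      unfolding l_def B_def cmod_power2 by (simp add: power2_eq_square algebra_simps)
    finally show ?thesis .
  qed
  show ?thesis
  proof (cases "c = 0")
    case True
    have "B = 0"
    proof (rule ccontr)
      assume "B \<noteq> 0"
      hence Bp: "B > 0" unfolding B_def by simp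
      have "0 \<le> a - 2 * ((a + 1) / (2 * B)) * B" using key[of "(a + 1) / (2 * B)"] True by simp
      also have "\<dots> = -1" using Bp by (simp add: field_simps)
      finally show False by simp
    qed
    thus ?thesis using True unfolding B_def b_def a_def c_def by simp
  next
    case False
    hence cp: "c > 0" using c0 by simp
    have "0 \<le> a - 2 * (1/c) * B + (1/c)^2 * B * c" using key by blast
    also have "\<dots> = a - B / c" using cp by (simp add: field_simps power2_eq_square)
    finally have "B \<le> a * c" using cp by (simp add: field_simps)
    thus ?thesis unfolding B_def b_def a_def c_def .
  qed
qed




definition ev :: "nat \<Rightarrow> nat \<Rightarrow> complex" where "ev k = (\<lambda>a. if a = k then 1 else 0)"

lemma qf_ev_left: "k < n \<Longrightarrow> qf n A (ev k) g = (\<Sum>b<n. A $$ (k,b) * g b)"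
  unfolding qf_def ev_def by (simp add: if_distrib if_distribR sum.If_cases)

lemma qf_ev_ev: "k < n \<Longrightarrow> qf n A (ev k) (ev k) = A $$ (k,k)"
  unfolding qf_ev_left by (simp add: ev_def if_distrib sum.If_cases)

lemma qf_add: "Q \<in> carrier_mat n n \<Longrightarrow> R \<in> carrier_mat n n \<Longrightarrow> qf n (Q + R) f g = qf n Q f g + qf n R f g"
  unfolding qf_def by (simp add: algebra_simps sum.distrib)

lemma entry_triple: assumes U: "U \<in> carrier_mat n n" and P: "P \<in> carrier_mat n n" and ij: "i < n" "j < n"
  shows "(mat_adjoint U * P * U) $$ (i,j) = qf n P (\<lambda>a. U $$ (a,i)) (\<lambda>b. U $$ (b,j))"
proof -
  have UH: "mat_adjoint U \<in> carrier_mat n n" using U by auto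
  have "(mat_adjoint U * P * U) $$ (i,j) = (\<Sum>b<n. (mat_adjoint U * P) $$ (i,b) * U $$ (b,j))"
    by (rule mult_entry[OF mult_carrier_mat[OF UH P] U ij])
  also have "\<dots> = (\<Sum>b<n. (\<Sum>a<n. cnj (U $$ (a,i)) * P $$ (a,b)) * U $$ (b,j))"
  proof (rule sum.cong[OF refl])
    fix b assume b: "b \<in> {..<n}"
    have "(mat_adjoint U * P) $$ (i,b) = (\<Sum>a<n. mat_adjoint U $$ (i,a) * P $$ (a,b))"
      by (rule mult_entry[OF UH P ij(1)], insert b, auto)
    also have "\<dots> = (\<Sum>a<n. cnj (U $$ (a,i)) * P $$ (a,b))" using U ij by (auto intro!: sum.cong)
    finally show "(mat_adjoint U * P) $$ (i,b) * U $$ (b,j) = (\<Sum>a<n. cnj (U $$ (a,i)) * P $$ (a,b)) * U $$ (b,j)" by simp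
  qed
  also have "\<dots> = (\<Sum>b<n. \<Sum>a<n. cnj (U $$ (a,i)) * P $$ (a,b) * U $$ (b,j))"
    by (simp add: sum_distrib_right)
  also have "\<dots> = qf n P (\<lambda>a. U $$ (a,i)) (\<lambda>b. U $$ (b,j))"
    unfolding qf_def by (rule sum.swap)
  finally show ?thesis .
qed

lemma psd_diag: assumes "psd_mat n Q" "k < n" shows "Q $$ (k,k) = of_real (Re (Q $$ (k,k)))" "0 \<le> Re (Q $$ (k,k))"
  using psd_qf[OF assms(1), of "ev k"] qf_ev_ev[OF assms(2), of Q] by (auto simp: complex_eq_iff)

lemma unitary_col_norm: assumes U: "unitary_mat n U" and i: "i < n"
  shows "(\<Sum>k<n. (cmod (U $$ (k,i)))^2) = 1"
proof -
  have Uc: "U \<in> carrier_mat n n" using U unfolding unitary_mat_def by auto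
  have "(1::complex) = (mat_adjoint U * U) $$ (i,i)" using U i unfolding unitary_mat_def by auto
  also have "\<dots> = (\<Sum>k<n. mat_adjoint U $$ (i,k) * U $$ (k,i))"
    by (rule mult_entry[of _ n n _ n], insert Uc i, auto)
  also have "\<dots> = (\<Sum>k<n. complex_of_real ((cmod (U $$ (k,i)))^2))"
  proof (rule sum.cong[OF refl])
    fix k assume "k \<in> {..<n}"
    hence "mat_adjoint U $$ (i,k) = cnj (U $$ (k,i))" using Uc i by auto
    thus "mat_adjoint U $$ (i,k) * U $$ (k,i) = complex_of_real ((cmod (U $$ (k,i)))^2)"
      by (subst complex_norm_square, simp add: mult.commute)
  qed
  also have "\<dots> = of_real (\<Sum>k<n. (cmod (U $$ (k,i)))^2)" by (simp only: of_real_sum)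
  finally show ?thesis by (metis of_real_eq_1_iff)
qed

lemma diag_right: assumes U: "U \<in> carrier_mat n n" and k: "k < n" and i: "i < n"
  shows "(U * diagm n x) $$ (k,i) = U $$ (k,i) * of_real (x i)"
proof -
  have "(U * diagm n x) $$ (k,i) = (\<Sum>b<n. U $$ (k,b) * diagm n x $$ (b,i))"
    by (rule mult_entry[OF U diagm_carrier k i])
  also have "\<dots> = (\<Sum>b\<in>{..<n}. if b = i then U $$ (k,i) * of_real (x i) else 0)"
    by (rule sum.cong[OF refl], insert i, auto)
  also have "\<dots> = U $$ (k,i) * of_real (x i)" by (subst sum.delta, insert i, auto)
  finally show ?thesis .
qed

lemma eig_bound:
  assumes Q: "psd_mat d Q" and R: "psd_mat d R" and U: "unitary_mat d U"
    and dec: "Q + R = U * diagm d x * mat_adjoint U" and i: "i < d"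
    and Hm: "\<And>s t. 0 \<le> s \<Longrightarrow> 0 \<le> t \<Longrightarrow>
       s^2 * (\<Sum>k<d. Re (Q $$ (k,k))) + 2 * s * t * (\<Sum>k<d. sqrt (Re (Q $$ (k,k)) * Re (R $$ (k,k))))
       + t^2 * (\<Sum>k<d. Re (R $$ (k,k))) \<le> m * (s^2 + t^2)"
  shows "0 \<le> x i \<and> x i \<le> m"
proof -
  have Qc: "Q \<in> carrier_mat d d" and Rc: "R \<in> carrier_mat d d" using Q R unfolding psd_mat_def by auto
  have Uc: "U \<in> carrier_mat d d" using U unfolding unitary_mat_def by auto
  have UH: "mat_adjoint U \<in> carrier_mat d d" using Uc by auto
  have UHU: "mat_adjoint U * U = 1\<^sub>m d" using U unfolding unitary_mat_def by auto
  define P where "P = Q + R"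
  have Pc: "P \<in> carrier_mat d d" unfolding P_def using Qc Rc by auto
  have PU: "P * U = U * diagm d x"
  proof -
    have "P * U = U * diagm d x * (mat_adjoint U * U)"
      unfolding P_def dec using Uc UH by (simp add: assoc_mult_mat[of _ d d _ d _ d] sq_mult_carrier)
    thus ?thesis unfolding UHU using Uc by simp
  qed
  have UPU: "mat_adjoint U * P * U = diagm d x"
  proof -
    have "mat_adjoint U * P * U = (mat_adjoint U * U) * diagm d x * (mat_adjoint U * U)"
      unfolding P_def dec using Uc UH by (simp add: assoc_mult_mat[of _ d d _ d _ d] sq_mult_carrier)
    thus ?thesis unfolding UHU by simp
  qed
  define u where "u = (\<lambda>a. U $$ (a,i))"
  define sQ where "sQ = Re (qf d Q u u)"
  define sR where "sR = Re (qf d R u u)"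
  have sQ0: "0 \<le> sQ" and sR0: "0 \<le> sR" using psd_qf[OF Q, of u] psd_qf[OF R, of u] unfolding sQ_def sR_def by auto
  have "complex_of_real (x i) = (mat_adjoint U * P * U) $$ (i,i)" unfolding UPU using i by simp
  also have "\<dots> = qf d P u u" unfolding u_def by (rule entry_triple[OF Uc Pc i i])
  also have "\<dots> = qf d Q u u + qf d R u u" unfolding P_def by (rule qf_add[OF Qc Rc])
  finally have "x i = sQ + sR" unfolding sQ_def sR_def by (metis Re_complex_of_real plus_complex.sel(1))
  hence xi: "x i = sQ + sR" .
  have x0: "0 \<le> x i" using xi sQ0 sR0 by simp
  define aQ where "aQ = (\<lambda>k. Re (Q $$ (k,k)))"
  define aR where "aR = (\<lambda>k. Re (R $$ (k,k)))"
  have aQ0: "k < d \<Longrightarrow> 0 \<le> aQ k" and aR0: "k < d \<Longrightarrow> 0 \<le> aR k" for k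
    unfolding aQ_def aR_def using psd_diag(2)[OF Q] psd_diag(2)[OF R] by auto
  define qQ where "qQ = (\<lambda>k. \<Sum>b<d. Q $$ (k,b) * u b)"
  define qR where "qR = (\<lambda>k. \<Sum>b<d. R $$ (k,b) * u b)"
  define s where "s = sqrt sQ"
  define t where "t = sqrt sR"
  have s0: "0 \<le> s" and t0: "0 \<le> t" unfolding s_def t_def using sQ0 sR0 by auto
  have bQ: "cmod (qQ k) \<le> sqrt (aQ k) * s" if k: "k < d" for k
  proof -
    have "(cmod (qQ k))^2 \<le> Re (qf d Q (ev k) (ev k)) * Re (qf d Q u u)"
      using qf_cs[OF Q, of "ev k" u] unfolding qQ_def qf_ev_left[OF k] .
    also have "\<dots> = aQ k * sQ" unfolding aQ_def sQ_def qf_ev_ev[OF k] ..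
    finally have "cmod (qQ k) \<le> sqrt (aQ k * sQ)" by (simp add: real_le_rsqrt)
    thus ?thesis unfolding s_def by (simp add: real_sqrt_mult)
  qed
  have bR: "cmod (qR k) \<le> sqrt (aR k) * t" if k: "k < d" for k
  proof -
    have "(cmod (qR k))^2 \<le> Re (qf d R (ev k) (ev k)) * Re (qf d R u u)"
      using qf_cs[OF R, of "ev k" u] unfolding qR_def qf_ev_left[OF k] .
    also have "\<dots> = aR k * sR" unfolding aR_def sR_def qf_ev_ev[OF k] ..
    finally have "cmod (qR k) \<le> sqrt (aR k * sR)" by (simp add: real_le_rsqrt)
    thus ?thesis unfolding t_def by (simp add: real_sqrt_mult)
  qed
  have qsum: "qQ k + qR k = u k * of_real (x i)" if k: "k < d" for k
  proof -
    have "(P * U) $$ (k,i) = (\<Sum>b<d. P $$ (k,b) * U $$ (b,i))" by (rule mult_entry[OF Pc Uc k i])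
    also have "\<dots> = qQ k + qR k" unfolding qQ_def qR_def P_def u_def using Qc Rc k
      by (simp add: sum.distrib algebra_simps)
    finally have "qQ k + qR k = (P * U) $$ (k,i)" by simp
    also have "\<dots> = u k * of_real (x i)" unfolding PU u_def by (rule diag_right[OF Uc k i])
    finally show ?thesis .
  qed
  have "(x i)^2 = (\<Sum>k<d. (cmod (u k))^2) * (x i)^2"
    using unitary_col_norm[OF U i] unfolding u_def by simp
  also have "\<dots> = (\<Sum>k<d. (cmod (qQ k + qR k))^2)"
    by (auto simp: sum_distrib_right qsum norm_mult power_mult_distrib intro!: sum.cong)
  also have "\<dots> \<le> (\<Sum>k<d. (sqrt (aQ k) * s + sqrt (aR k) * t)^2)"
  proof (rule sum_mono)
    fix k assume "k \<in> {..<d}"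
    hence k: "k < d" by simp
    have "cmod (qQ k + qR k) \<le> cmod (qQ k) + cmod (qR k)" by (rule norm_triangle_ineq)
    also have "\<dots> \<le> sqrt (aQ k) * s + sqrt (aR k) * t" using bQ[OF k] bR[OF k] by simp
    finally show "(cmod (qQ k + qR k))^2 \<le> (sqrt (aQ k) * s + sqrt (aR k) * t)^2"
      by (rule power_mono, simp)
  qed
  also have "\<dots> = s^2 * (\<Sum>k<d. aQ k) + 2 * s * t * (\<Sum>k<d. sqrt (aQ k * aR k)) + t^2 * (\<Sum>k<d. aR k)"
  proof -
    have "(\<Sum>k<d. (sqrt (aQ k) * s + sqrt (aR k) * t)^2) = (\<Sum>k<d. s^2 * aQ k + 2 * s * t * sqrt (aQ k * aR k) + t^2 * aR k)"
    proof (rule sum.cong[OF refl])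
      fix k assume "k \<in> {..<d}"
      hence k: "k < d" by simp
      show "(sqrt (aQ k) * s + sqrt (aR k) * t)^2 = s^2 * aQ k + 2 * s * t * sqrt (aQ k * aR k) + t^2 * aR k"
        using aQ0[OF k] aR0[OF k] by (simp add: power2_eq_square algebra_simps real_sqrt_mult)
    qed
    thus ?thesis by (simp add: sum.distrib sum_distrib_left)
  qed
  also have "\<dots> \<le> m * (s^2 + t^2)" using Hm[OF s0 t0] unfolding aQ_def aR_def by simp
  also have "s^2 + t^2 = x i" unfolding s_def t_def xi using sQ0 sR0 by simp
  finally have sq: "(x i)^2 \<le> m * x i" .
  have "0 \<le> m"
  proof -
    have "1^2 * (\<Sum>k<d. aQ k) + 2 * 1 * 0 * (\<Sum>k<d. sqrt (aQ k * aR k)) + 0^2 * (\<Sum>k<d. aR k) \<le> m * (1^2 + 0^2)"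
      using Hm[of 1 0] unfolding aQ_def aR_def by simp
    moreover have "0 \<le> (\<Sum>k<d. aQ k)" using aQ0 by (auto intro: sum_nonneg)
    ultimately show ?thesis by simp
  qed
  have "x i \<le> m"
  proof (cases "x i = 0")
    case True thus ?thesis using \<open>0 \<le> m\<close> by simp
  next
    case False
    hence "x i > 0" using x0 by simp
    thus ?thesis using sq by (simp add: power2_eq_square)
  qed
  thus ?thesis using x0 by simp
qed




lemma mset_linear_factors:
  fixes A B :: "complex multiset"
  shows "prod_mset (image_mset (\<lambda>e. [:-e,1:]) A) = prod_mset (image_mset (\<lambda>e. [:-e,1:]) B) \<Longrightarrow> A = B"
proof (induction A arbitrary: B)
  case empty
  show ?case
  proof (rule ccontr)
    assume "{#} \<noteq> B"
    then obtain b where b: "b \<in># B" by (metis multiset_nonemptyE)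
    have "poly (prod_mset (image_mset (\<lambda>e. [:-e,1:]) B)) b = 0"
      unfolding poly_prod_mset prod_mset_zero_iff in_image_mset using b by force
    thus False using empty by simp
  qed
next
  case (add a A)
  have "poly (prod_mset (image_mset (\<lambda>e. [:-e,1:]) B)) a = 0"
    unfolding add.prems[symmetric] by simp
  hence "0 \<in># image_mset (\<lambda>e. poly [:-e,1:] a) B" unfolding poly_prod_mset by simp
  then obtain b where b: "b \<in># B" and "poly [:-b,1:] a = 0" by auto
  hence ab: "a \<in># B" by simp
  hence Bd: "B = add_mset a (B - {#a#})" by simp
  have "[:-a,1:] * prod_mset (image_mset (\<lambda>e. [:-e,1:]) A) = [:-a,1:] * prod_mset (image_mset (\<lambda>e. [:-e,1:]) (B - {#a#}))"
    using add.prems by (subst (asm) Bd, simp)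
  hence "prod_mset (image_mset (\<lambda>e. [:-e,1:]) A) = prod_mset (image_mset (\<lambda>e. [:-e,1:]) (B - {#a#}))"
    by (subst (asm) mult_left_cancel, auto)
  from add.IH[OF this] show ?case using Bd by simp
qed

lemma adj_diagm[simp]: "mat_adjoint (diagm n x) = diagm n x"
  by (rule eq_matI, auto)

lemma diagm_mult: "diagm n x * diagm n y = diagm n (\<lambda>i. x i * y i)"
proof (rule eq_matI)
  fix i j assume "i < dim_row (diagm n (\<lambda>i. x i * y i))" "j < dim_col (diagm n (\<lambda>i. x i * y i))"
  hence i: "i < n" and j: "j < n" by auto
  have "(diagm n x * diagm n y) $$ (i,j) = (\<Sum>k<n. diagm n x $$ (i,k) * diagm n y $$ (k,j))"
    by (rule mult_entry[OF diagm_carrier diagm_carrier i j])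
  also have "\<dots> = (\<Sum>k\<in>{..<n}. if k = i then (if i = j then complex_of_real (x i * y i) else 0) else 0)"
    by (rule sum.cong[OF refl], insert i j, auto)
  also have "\<dots> = diagm n (\<lambda>i. x i * y i) $$ (i,j)" by (subst sum.delta, insert i j, auto)
  finally show "(diagm n x * diagm n y) $$ (i,j) = diagm n (\<lambda>i. x i * y i) $$ (i,j)" .
qed auto

lemma herm_of_diag: assumes U: "unitary_mat n U" and X: "X = U * diagm n x * mat_adjoint U"
  shows "mat_adjoint X = X"
proof -
  have Uc: "U \<in> carrier_mat n n" using U unfolding unitary_mat_def by auto
  have "mat_adjoint X = mat_adjoint (mat_adjoint U) * mat_adjoint (diagm n x) * mat_adjoint U"
    unfolding X using Uc by (simp add: adj_mult[of _ n n _ n] assoc_mult_mat[of _ n n _ n _ n] sq_mult_carrier sq_adj_carrier)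
  thus ?thesis unfolding X by simp
qed

lemma square_of_diag: assumes U: "unitary_mat n U" and X: "X = U * diagm n x * mat_adjoint U"
  shows "X * X = U * diagm n (\<lambda>i. x i * x i) * mat_adjoint U"
proof -
  have Uc: "U \<in> carrier_mat n n" using U unfolding unitary_mat_def by auto
  have UHU: "mat_adjoint U * U = 1\<^sub>m n" using U unfolding unitary_mat_def by auto
  have "X * X = U * diagm n x * (mat_adjoint U * U) * diagm n x * mat_adjoint U"
    unfolding X using Uc by (simp add: assoc_mult_mat[of _ n n _ n _ n] sq_mult_carrier sq_adj_carrier)
  also have "\<dots> = U * (diagm n x * diagm n x) * mat_adjoint U"
    unfolding UHU using Uc by (simp add: assoc_mult_mat[of _ n n _ n _ n] sq_mult_carrier sq_adj_carrier)
  finally show ?thesis by (simp add: diagm_mult)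
qed

lemma char_poly_of_diag: assumes U: "unitary_mat n U" and X: "X = U * diagm n x * mat_adjoint U"
  shows "char_poly X = (\<Prod>a\<leftarrow>map (\<lambda>i. complex_of_real (x i)) [0..<n]. [:-a,1:])"
proof -
  have Uc: "U \<in> carrier_mat n n" using U unfolding unitary_mat_def by auto
  have "similar_mat_wit X (diagm n x) U (mat_adjoint U)"
    unfolding similar_mat_wit_def Let_def using Uc U unitary_right[OF U] X
    unfolding unitary_mat_def by auto
  hence "similar_mat X (diagm n x)" unfolding similar_mat_def by blast
  hence "char_poly X = char_poly (diagm n x)" by (rule char_poly_similar)
  also have "\<dots> = (\<Prod>a\<leftarrow>diag_mat (diagm n x). [:-a,1:])"
    by (rule char_poly_upper_triangular[OF diagm_carrier], auto simp: upper_triangular_def)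
  also have "diag_mat (diagm n x) = map (\<lambda>i. complex_of_real (x i)) [0..<n]"
    unfolding diag_mat_def by auto
  finally show ?thesis .
qed

lemma eigvals_of_diag: assumes U: "unitary_mat n U" and X: "X = U * diagm n x * mat_adjoint U"
  shows "mset (eigvals_mult X) = mset (map (\<lambda>i. complex_of_real (x i)) [0..<n])"
proof -
  let ?L = "map (\<lambda>i. complex_of_real (x i)) [0..<n]"
  have ex: "char_poly X = (\<Prod>e\<leftarrow>?L. [:-e,1:])" by (rule char_poly_of_diag[OF U X])
  have "char_poly X = (\<Prod>e\<leftarrow>eigvals_mult X. [:-e,1:])"
    unfolding eigvals_mult_def by (rule someI, rule ex)
  hence "(\<Prod>e\<leftarrow>eigvals_mult X. [:-e,1:]) = (\<Prod>e\<leftarrow>?L. [:-e,1:])" using ex by simp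
  hence "prod_mset (image_mset (\<lambda>e. [:-e,1:]) (mset (eigvals_mult X))) = prod_mset (image_mset (\<lambda>e. [:-e,1:]) (mset ?L))"
    by (simp only: prod_mset_prod_list mset_map[symmetric])
  thus ?thesis by (rule mset_linear_factors)
qed

lemma schatten_of_diag: assumes U: "unitary_mat n U" and X: "X = U * diagm n x * mat_adjoint U"
  shows "schatten q X = (\<Sum>i<n. \<bar>x i\<bar> powr q) powr (1/q)"
proof -
  have XX: "mat_adjoint X * X = U * diagm n (\<lambda>i. x i * x i) * mat_adjoint U"
    unfolding herm_of_diag[OF U X] by (rule square_of_diag[OF U X])
  have m: "mset (eigvals_mult (mat_adjoint X * X)) = mset (map (\<lambda>i. complex_of_real (x i * x i)) [0..<n])"
    by (rule eigvals_of_diag[OF U XX])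
  let ?g = "\<lambda>e. Re e powr (q/2)"
  have "(\<Sum>e\<leftarrow>eigvals_mult (mat_adjoint X * X). ?g e) = sum_mset (image_mset ?g (mset (eigvals_mult (mat_adjoint X * X))))"
    by (simp only: sum_mset_sum_list mset_map[symmetric])
  also have "\<dots> = sum_mset (image_mset ?g (mset (map (\<lambda>i. complex_of_real (x i * x i)) [0..<n])))"
    unfolding m ..
  also have "\<dots> = (\<Sum>i\<leftarrow>[0..<n]. ?g (complex_of_real (x i * x i)))"
    by (simp only: sum_mset_sum_list mset_map[symmetric] map_map o_def)
  also have "\<dots> = (\<Sum>i\<in>set [0..<n]. ?g (complex_of_real (x i * x i)))"
    by (rule sum_set_upt_conv_sum_list_nat[symmetric])
  also have "\<dots> = (\<Sum>i<n. \<bar>x i\<bar> powr q)"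
  proof (rule sum.cong)
    fix i
    have eq: "x i * x i = \<bar>x i\<bar> powr 2"
    proof (cases "x i = 0")
      case False thus ?thesis by (simp add: powr_realpow power2_eq_square)
    qed simp
    have "(x i * x i) powr (q/2) = (\<bar>x i\<bar> powr 2) powr (q/2)" by (simp only: eq)
    also have "\<dots> = \<bar>x i\<bar> powr q" by (subst powr_powr, simp)
    finally have "(x i * x i) powr (q/2) = \<bar>x i\<bar> powr q" .
    thus "?g (complex_of_real (x i * x i)) = \<bar>x i\<bar> powr q" by simp
  qed (auto simp: lessThan_atLeast0)
  finally show ?thesis unfolding schatten_def by simp
qed

lemma trace_of_diag: assumes U: "unitary_mat n U" and X: "X = U * diagm n x * mat_adjoint U"
  shows "(\<Sum>k<n. X $$ (k,k)) = complex_of_real (\<Sum>i<n. x i)"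
proof -
  have Uc: "U \<in> carrier_mat n n" using U unfolding unitary_mat_def by auto
  have e: "X $$ (k,k) = (\<Sum>b<n. complex_of_real (x b * (cmod (U $$ (k,b)))^2))" if k: "k < n" for k
  proof -
    have "X $$ (k,k) = (\<Sum>b<n. (U * diagm n x) $$ (k,b) * mat_adjoint U $$ (b,k))"
      unfolding X by (rule mult_entry[OF mult_carrier_mat[OF Uc diagm_carrier] _ k k], insert Uc, auto)
    also have "\<dots> = (\<Sum>b<n. complex_of_real (x b * (cmod (U $$ (k,b)))^2))"
    proof (rule sum.cong[OF refl])
      fix b assume "b \<in> {..<n}"
      hence b: "b < n" by simp
      have "(U * diagm n x) $$ (k,b) * mat_adjoint U $$ (b,k) = complex_of_real (x b) * (U $$ (k,b) * cnj (U $$ (k,b)))"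
        unfolding diag_right[OF Uc k b] using Uc k b by simp
      also have "\<dots> = complex_of_real (x b * (cmod (U $$ (k,b)))^2)"
        by (subst complex_norm_square[symmetric], simp)
      finally show "(U * diagm n x) $$ (k,b) * mat_adjoint U $$ (b,k) = complex_of_real (x b * (cmod (U $$ (k,b)))^2)" .
    qed
    finally show ?thesis .
  qed
  have "(\<Sum>k<n. X $$ (k,k)) = (\<Sum>k<n. \<Sum>b<n. complex_of_real (x b * (cmod (U $$ (k,b)))^2))"
    using e by simp
  also have "\<dots> = (\<Sum>b<n. \<Sum>k<n. complex_of_real (x b * (cmod (U $$ (k,b)))^2))" by (rule sum.swap)
  also have "\<dots> = (\<Sum>b<n. complex_of_real (x b * (\<Sum>k<n. (cmod (U $$ (k,b)))^2)))"
    by (simp only: of_real_sum[symmetric] sum_distrib_left)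
  also have "\<dots> = (\<Sum>b<n. complex_of_real (x b))"
    using unitary_col_norm[OF U] by simp
  finally show ?thesis by (simp only: of_real_sum)
qed




definition swapf :: "nat \<Rightarrow> nat \<Rightarrow> nat \<Rightarrow> nat" where
  "swapf i j k = (if k = i then j else if k = j then i else k)"

lemma swapf_inv[simp]: "swapf i j (swapf i j k) = k" unfolding swapf_def by auto

lemma swapf_lt: "i < d \<Longrightarrow> j < d \<Longrightarrow> k < d \<Longrightarrow> swapf i j k < d" unfolding swapf_def by auto

lemma swapf_eq: "(r = swapf i j k) = (k = swapf i j r)" unfolding swapf_def by auto

definition Pm :: "nat \<Rightarrow> nat \<Rightarrow> nat \<Rightarrow> complex mat" where
  "Pm d i j = mat d d (\<lambda>(r,c). if r = swapf i j c then 1 else 0)"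

lemma Pm_carrier[simp]: "Pm d i j \<in> carrier_mat d d" unfolding Pm_def by auto

lemma Pm_dims[simp]: "dim_row (Pm d i j) = d" "dim_col (Pm d i j) = d" unfolding Pm_def by auto

lemma Pm_left: assumes ij: "i < d" "j < d" and A: "A \<in> carrier_mat d n" and r: "r < d" and c: "c < n"
  shows "(Pm d i j * A) $$ (r,c) = A $$ (swapf i j r, c)"
proof -
  have "(Pm d i j * A) $$ (r,c) = (\<Sum>k<d. Pm d i j $$ (r,k) * A $$ (k,c))"
    by (rule mult_entry[OF Pm_carrier A r c])
  also have "\<dots> = (\<Sum>k\<in>{..<d}. if k = swapf i j r then A $$ (swapf i j r, c) else 0)"
    by (rule sum.cong[OF refl], insert r, auto simp: Pm_def swapf_eq)
  also have "\<dots> = A $$ (swapf i j r, c)" by (subst sum.delta, insert swapf_lt[OF ij r], auto)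
  finally show ?thesis .
qed

lemma Pm_right: assumes ij: "i < d" "j < d" and A: "A \<in> carrier_mat n d" and r: "r < n" and c: "c < d"
  shows "(A * Pm d i j) $$ (r,c) = A $$ (r, swapf i j c)"
proof -
  have "(A * Pm d i j) $$ (r,c) = (\<Sum>k<d. A $$ (r,k) * Pm d i j $$ (k,c))"
    by (rule mult_entry[OF A Pm_carrier r c])
  also have "\<dots> = (\<Sum>k\<in>{..<d}. if k = swapf i j c then A $$ (r, swapf i j c) else 0)"
    by (rule sum.cong[OF refl], insert c, auto simp: Pm_def)
  also have "\<dots> = A $$ (r, swapf i j c)" by (subst sum.delta, insert swapf_lt[OF ij c], auto)
  finally show ?thesis .
qed

lemma Pm_adj: assumes "i < d" "j < d" shows "mat_adjoint (Pm d i j) = Pm d i j"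
  by (rule eq_matI, insert assms, auto simp: Pm_def swapf_lt swapf_eq)

lemma Pm_unitary: assumes ij: "i < d" "j < d" shows "unitary_mat d (Pm d i j)"
proof -
  have "Pm d i j * Pm d i j = 1\<^sub>m d"
  proof (rule eq_matI)
    fix r c assume "r < dim_row (1\<^sub>m d)" "c < dim_col (1\<^sub>m d)"
    hence r: "r < d" and c: "c < d" by auto
    show "(Pm d i j * Pm d i j) $$ (r,c) = 1\<^sub>m d $$ (r,c)"
      unfolding Pm_left[OF ij Pm_carrier r c] using r c swapf_lt[OF ij r] by (auto simp: Pm_def swapf_eq)
  qed auto
  thus ?thesis unfolding unitary_mat_def Pm_adj[OF ij] by auto
qed

lemma Pm_diag: assumes ij: "i < d" "j < d" "i \<noteq> j"
  shows "Pm d i j * diagm d (x(i:=A, j:=B)) * Pm d i j = diagm d (x(i:=B, j:=A))"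
proof (rule eq_matI)
  fix r c assume "r < dim_row (diagm d (x(i:=B, j:=A)))" "c < dim_col (diagm d (x(i:=B, j:=A)))"
  hence r: "r < d" and c: "c < d" by auto
  have "(Pm d i j * diagm d (x(i:=A, j:=B)) * Pm d i j) $$ (r,c) = (Pm d i j * diagm d (x(i:=A, j:=B))) $$ (r, swapf i j c)"
    using Pm_right[OF ij(1,2) mult_carrier_mat[OF Pm_carrier diagm_carrier] r c] by simp
  also have "\<dots> = diagm d (x(i:=A, j:=B)) $$ (swapf i j r, swapf i j c)"
    using Pm_left[OF ij(1,2) diagm_carrier r swapf_lt[OF ij(1,2) c]] by simp
  also have "\<dots> = diagm d (x(i:=B, j:=A)) $$ (r,c)"
    using r c swapf_lt[OF ij(1,2) r] swapf_lt[OF ij(1,2) c] ij(3)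
    by (auto simp: swapf_def)
  finally show "(Pm d i j * diagm d (x(i:=A, j:=B)) * Pm d i j) $$ (r,c) = diagm d (x(i:=B, j:=A)) $$ (r,c)" .
qed auto

lemma N_unitary_inv: assumes N: "ui_norm d N" and U: "unitary_mat d U" and A: "A \<in> carrier_mat d d"
  shows "N (U * A * mat_adjoint U) = N A"
  using N U unitary_adj[OF U] A unfolding ui_norm_def by blast

lemma N_T: assumes N: "ui_norm d N" and ij: "i < d" "j < d" "i \<noteq> j"
  and ab: "B \<le> a" "a \<le> A" "a + b = A + B"
  shows "N (diagm d (x(i:=a, j:=b))) \<le> N (diagm d (x(i:=A, j:=B)))"
proof (cases "A = B")
  case True
  hence "a = A" "b = B" using ab by auto
  thus ?thesis by simp
next
  case False
  hence AB: "B < A" using ab by auto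
  define t where "t = (a - B) / (A - B)"
  have t: "0 \<le> t" "t \<le> 1" unfolding t_def using ab AB by auto
  have h: "t * (A - B) = a - B" unfolding t_def using AB by simp
  define D1 where "D1 = diagm d (x(i:=A, j:=B))"
  define D2 where "D2 = diagm d (x(i:=B, j:=A))"
  have D1: "D1 \<in> carrier_mat d d" and D2: "D2 \<in> carrier_mat d d" unfolding D1_def D2_def by auto
  have dec: "diagm d (x(i:=a, j:=b)) = complex_of_real t \<cdot>\<^sub>m D1 + complex_of_real (1 - t) \<cdot>\<^sub>m D2"
  proof (rule eq_matI)
    fix r c assume "r < dim_row (complex_of_real t \<cdot>\<^sub>m D1 + complex_of_real (1 - t) \<cdot>\<^sub>m D2)"
      "c < dim_col (complex_of_real t \<cdot>\<^sub>m D1 + complex_of_real (1 - t) \<cdot>\<^sub>m D2)"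
    hence r: "r < d" and c: "c < d" using D1 D2 by auto
    have e1: "a = t * A + (1 - t) * B" using h by (simp add: algebra_simps)
    have e2: "b = t * B + (1 - t) * A" using h ab(3) by (simp add: algebra_simps)
    have e3: "x r = t * x r + (1 - t) * x r" by (simp add: algebra_simps)
    have lhs: "(complex_of_real t \<cdot>\<^sub>m D1 + complex_of_real (1 - t) \<cdot>\<^sub>m D2) $$ (r,c)
      = complex_of_real t * D1 $$ (r,c) + complex_of_real (1 - t) * D2 $$ (r,c)"
      using r c D1 D2 by simp
    show "diagm d (x(i:=a, j:=b)) $$ (r,c) = (complex_of_real t \<cdot>\<^sub>m D1 + complex_of_real (1 - t) \<cdot>\<^sub>m D2) $$ (r,c)"
      unfolding lhs
    proof (cases "r = c")
      case False thus "diagm d (x(i:=a, j:=b)) $$ (r,c) = complex_of_real t * D1 $$ (r,c) + complex_of_real (1 - t) * D2 $$ (r,c)"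
        using r c unfolding D1_def D2_def by simp
    next
      case True
      have "(x(i:=a, j:=b)) r = t * (x(i:=A, j:=B)) r + (1 - t) * (x(i:=B, j:=A)) r"
        using ij(3) e1 e2 e3 by (cases "r = i"; cases "r = j"; simp)
      hence "complex_of_real ((x(i:=a, j:=b)) r) = complex_of_real t * complex_of_real ((x(i:=A, j:=B)) r)
         + complex_of_real (1 - t) * complex_of_real ((x(i:=B, j:=A)) r)"
        by (metis of_real_add of_real_mult)
      thus "diagm d (x(i:=a, j:=b)) $$ (r,c) = complex_of_real t * D1 $$ (r,c) + complex_of_real (1 - t) * D2 $$ (r,c)"
        using r c True unfolding D1_def D2_def by (simp only: diagm_index if_True refl)
    qed
  qed (insert D1 D2, auto)
  have "N (diagm d (x(i:=a, j:=b))) \<le> N (complex_of_real t \<cdot>\<^sub>m D1) + N (complex_of_real (1 - t) \<cdot>\<^sub>m D2)"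
  proof -
    have tri: "\<forall>A\<in>carrier_mat d d. \<forall>B\<in>carrier_mat d d. N (A + B) \<le> N A + N B" using N unfolding ui_norm_def by blast
    have c1: "complex_of_real t \<cdot>\<^sub>m D1 \<in> carrier_mat d d" "complex_of_real (1 - t) \<cdot>\<^sub>m D2 \<in> carrier_mat d d"
      using D1 D2 by auto
    show ?thesis unfolding dec using tri c1 by blast
  qed
  also have "\<dots> = t * N D1 + (1 - t) * N D2"
  proof -
    have hom: "\<forall>A\<in>carrier_mat d d. \<forall>c. N (c \<cdot>\<^sub>m A) = cmod c * N A" using N unfolding ui_norm_def by blast
    have "N (complex_of_real t \<cdot>\<^sub>m D1) = t * N D1" using hom D1 t by simp
    moreover have "N (complex_of_real (1 - t) \<cdot>\<^sub>m D2) = (1 - t) * N D2"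
    proof -
      have "N (complex_of_real (1 - t) \<cdot>\<^sub>m D2) = cmod (complex_of_real (1 - t)) * N D2" using hom D2 by blast
      moreover have "cmod (complex_of_real (1 - t)) = 1 - t" unfolding norm_of_real using t by simp
      ultimately show ?thesis by simp
    qed
    ultimately show ?thesis by simp
  qed
  also have "N D2 = N D1"
  proof -
    have "D2 = Pm d i j * D1 * mat_adjoint (Pm d i j)" unfolding Pm_adj[OF ij(1,2)] D1_def D2_def
      by (rule Pm_diag[OF ij, symmetric])
    thus ?thesis using N_unitary_inv[OF N Pm_unitary[OF ij(1,2)] D1] by simp
  qed
  finally have fin: "N (diagm d (x(i:=a, j:=b))) \<le> t * N D1 + (1 - t) * N D1" .
  have "t * N D1 + (1 - t) * N D1 = N D1" by (simp add: algebra_simps)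
  thus ?thesis using fin unfolding D1_def by linarith
qed




lemma mat2_carrier[simp]: "mat2 a b c e \<in> carrier_mat 2 2"
  unfolding mat2_def mat_of_rows_list_def by auto

lemma mat2_dims[simp]: "dim_row (mat2 a b c e) = 2" "dim_col (mat2 a b c e) = 2"
  unfolding mat2_def mat_of_rows_list_def by auto

lemma less2: "(i::nat) < 2 \<Longrightarrow> i = 0 \<or> i = 1" by auto

lemma mat2_index: "i < 2 \<Longrightarrow> j < 2 \<Longrightarrow> mat2 a b c e $$ (i,j) =
  (if i = 0 then (if j = 0 then a else b) else (if j = 0 then c else e))"
  unfolding mat2_def mat_of_rows_list_def using less2[of i] less2[of j] by auto

lemma mat2_herm: "mat_adjoint (mat2 (complex_of_real a) (complex_of_real b) (complex_of_real b) (complex_of_real c))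
   = mat2 (complex_of_real a) (complex_of_real b) (complex_of_real b) (complex_of_real c)"
proof (rule eq_matI)
  fix i j assume "i < dim_row (mat2 (complex_of_real a) (complex_of_real b) (complex_of_real b) (complex_of_real c))"
    "j < dim_col (mat2 (complex_of_real a) (complex_of_real b) (complex_of_real b) (complex_of_real c))"
  hence i: "i < 2" and j: "j < 2" by auto
  show "mat_adjoint (mat2 (complex_of_real a) (complex_of_real b) (complex_of_real b) (complex_of_real c)) $$ (i,j)
   = mat2 (complex_of_real a) (complex_of_real b) (complex_of_real b) (complex_of_real c) $$ (i,j)"
    using i j less2[OF i] less2[OF j] by (auto simp: mat2_index)
qed auto

lemma sum2: "(\<Sum>k<2. f k) = f 0 + f (1::nat)"
  by (simp add: numeral_2_eq_2)

lemma mat2_trace: "(\<Sum>k<2. mat2 a b c e $$ (k,k)) = a + e"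
  unfolding sum2 by (simp add: mat2_index)

lemma mat2_trace_sq: "(\<Sum>k<2. (mat2 a b c e * mat2 a b c e) $$ (k,k)) = a * a + b * c + c * b + e * e"
proof -
  have "(mat2 a b c e * mat2 a b c e) $$ (k,k) = (\<Sum>l<2. mat2 a b c e $$ (k,l) * mat2 a b c e $$ (l,k))" if "k < 2" for k
    by (rule mult_entry[OF mat2_carrier mat2_carrier that that])
  thus ?thesis unfolding sum2 by (simp add: sum2 mat2_index)
qed

lemma real_eig2:
  fixes a b c z0 z1 :: real
  assumes s1: "z0 + z1 = a + c" and s2: "z0 * z0 + z1 * z1 = a * a + 2 * (b * b) + c * c"
    and cs: "b * b \<le> a * c" and b0: "0 \<le> b" and a0: "0 \<le> a" and c0: "0 \<le> c"
  shows "0 \<le> min z0 z1" "min z0 z1 \<le> max z0 z1" "max z0 z1 + min z0 z1 = a + c"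
    "\<And>s t. 0 \<le> s \<Longrightarrow> 0 \<le> t \<Longrightarrow> s^2 * a + 2 * s * t * b + t^2 * c \<le> max z0 z1 * (s^2 + t^2)"
proof -
  define m where "m = max z0 z1"
  define m' where "m' = min z0 z1"
  have mm: "m + m' = a + c" unfolding m_def m'_def using s1 by (simp add: max_def min_def)
  have pr0: "z0 * z1 = a * c - b * b"
  proof -
    have "(z0 + z1) * (z0 + z1) = (a + c) * (a + c)" using s1 by simp
    thus ?thesis using s2 by (simp add: algebra_simps)
  qed
  have pr: "m * m' = a * c - b * b" unfolding m_def m'_def using pr0 by (simp add: max_def min_def mult.commute)
  have "0 \<le> m * m'" using pr cs by simp
  moreover have "0 \<le> m + m'" using mm a0 c0 by simp
  moreover have "m' \<le> m" unfolding m_def m'_def by simp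
  ultimately have m'0: "0 \<le> m'"
  proof -
    assume h: "0 \<le> m * m'" "0 \<le> m + m'" "m' \<le> m"
    show ?thesis
    proof (rule ccontr)
      assume "\<not> 0 \<le> m'"
      hence n: "m' < 0" by simp
      hence "m > 0" using h by linarith
      hence "m * m' < 0" using n by (simp add: mult_pos_neg)
      thus False using h by linarith
    qed
  qed
  show "0 \<le> min z0 z1" "min z0 z1 \<le> max z0 z1" "max z0 z1 + min z0 z1 = a + c"
    using m'0 mm unfolding m_def m'_def by auto
  define P where "P = m - a"
  define R where "R = m - c"
  have PR: "P * R = b * b"
  proof -
    have "P * R = m * m - m * (a + c) + a * c" unfolding P_def R_def by (simp add: algebra_simps)
    also have "\<dots> = m * m - m * (m + m') + a * c" using mm by simp
    also have "\<dots> = b * b" using pr by (simp add: algebra_simps)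
    finally show ?thesis .
  qed
  have "P + R = m - m'" unfolding P_def R_def using mm by simp
  hence PRs: "0 \<le> P + R" using \<open>m' \<le> m\<close> by simp
  have sq0: "0 \<le> P * R" unfolding PR by simp
  have P0: "0 \<le> P"
  proof (rule ccontr)
    assume "\<not> 0 \<le> P"
    hence n: "P < 0" by simp
    hence "R > 0" using PRs by linarith
    hence "P * R < 0" using n by (simp add: mult_neg_pos)
    thus False using sq0 by linarith
  qed
  have R0: "0 \<le> R"
  proof (rule ccontr)
    assume "\<not> 0 \<le> R"
    hence n: "R < 0" by simp
    hence "P > 0" using PRs by linarith
    hence "P * R < 0" using n by (simp add: mult_pos_neg)
    thus False using sq0 by linarith
  qed
  fix s t :: real assume s: "0 \<le> s" and t: "0 \<le> t"
  have key: "0 \<le> P * s^2 - 2 * s * t * b + R * t^2"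
  proof (cases "P = 0")
    case True
    hence "b = 0" using PR by simp
    thus ?thesis using True R0 by simp
  next
    case False
    hence Pp: "P > 0" using P0 by simp
    have "P * (P * s^2 - 2 * s * t * b + R * t^2) = (P * s - b * t)^2"
      using PR by (simp add: power2_eq_square algebra_simps)
    hence "0 \<le> P * (P * s^2 - 2 * s * t * b + R * t^2)" by simp
    thus ?thesis using Pp by (simp add: zero_le_mult_iff)
  qed
  show "s^2 * a + 2 * s * t * b + t^2 * c \<le> max z0 z1 * (s^2 + t^2)"
    using key unfolding P_def R_def m_def[symmetric] by (simp add: algebra_simps)
qed

lemma sum_upd2: fixes d :: nat assumes "i < d" "j < d" "i \<noteq> j"
  shows "(\<Sum>k<d. f ((x(i:=a, j:=b)) k)) = f a + f b + (\<Sum>k\<in>{..<d}-{i,j}. f (x k))"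
proof -
  have "(\<Sum>k<d. f ((x(i:=a, j:=b)) k)) = f ((x(i:=a, j:=b)) i) + (\<Sum>k\<in>{..<d}-{i}. f ((x(i:=a, j:=b)) k))"
    by (rule sum.remove, insert assms, auto)
  also have "(\<Sum>k\<in>{..<d}-{i}. f ((x(i:=a, j:=b)) k)) = f ((x(i:=a, j:=b)) j) + (\<Sum>k\<in>{..<d}-{i}-{j}. f ((x(i:=a, j:=b)) k))"
    by (rule sum.remove, insert assms, auto)
  also have "(\<Sum>k\<in>{..<d}-{i}-{j}. f ((x(i:=a, j:=b)) k)) = (\<Sum>k\<in>{..<d}-{i,j}. f (x k))"
    by (rule sum.cong, auto)
  finally have e: "(\<Sum>k<d. f ((x(i:=a, j:=b)) k)) = f ((x(i:=a, j:=b)) i) + (f ((x(i:=a, j:=b)) j) + (\<Sum>k\<in>{..<d}-{i,j}. f (x k)))" .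
  have vi: "(x(i:=a, j:=b)) i = a" using assms by simp
  have vj: "(x(i:=a, j:=b)) j = b" by simp
  show ?thesis unfolding e vi vj by (simp only: add.assoc)
qed

lemma dsum_block:
  fixes k :: nat
  assumes W2: "unitary_mat 2 W2" and M: "M = W2 * diagm 2 z * mat_adjoint W2"
  defines "W \<equiv> four_block_mat W2 (0\<^sub>m 2 k) (0\<^sub>m k 2) (1\<^sub>m k)"
  shows "unitary_mat (2 + k) W"
    "dsum_zero M k = W * diagm (2 + k) (\<lambda>i. if i < 2 then z i else 0) * mat_adjoint W"
proof -
  have W2c: "W2 \<in> carrier_mat 2 2" using W2 unfolding unitary_mat_def by auto
  have W2H: "mat_adjoint W2 \<in> carrier_mat 2 2" using W2c by auto
  have c0: "(0\<^sub>m 2 k :: complex mat) \<in> carrier_mat 2 k" "(0\<^sub>m k 2 :: complex mat) \<in> carrier_mat k 2"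
    "(1\<^sub>m k :: complex mat) \<in> carrier_mat k k" "(0\<^sub>m k k :: complex mat) \<in> carrier_mat k k" by auto
  have WH: "mat_adjoint W = four_block_mat (mat_adjoint W2) (0\<^sub>m 2 k) (0\<^sub>m k 2) (1\<^sub>m k)"
    unfolding W_def by (subst adj_four_block[OF W2c c0(1,2,3)], simp)
  have "mat_adjoint W * W = four_block_mat (mat_adjoint W2 * W2) (0\<^sub>m 2 k) (0\<^sub>m k 2) (1\<^sub>m k)"
    unfolding WH unfolding W_def
    by (subst mult_four_block_mat[OF W2H c0(1,2,3) W2c c0(1,2,3)], insert W2c W2H mult_carrier_mat[OF W2H W2c], simp)
  also have "\<dots> = 1\<^sub>m (2 + k)" using W2 unfolding unitary_mat_def by simp
  finally show "unitary_mat (2 + k) W" unfolding unitary_mat_def W_def using W2c by auto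
  have D: "diagm (2 + k) (\<lambda>i. if i < 2 then z i else 0) = four_block_mat (diagm 2 z) (0\<^sub>m 2 k) (0\<^sub>m k 2) (0\<^sub>m k k)"
    by (rule eq_matI, auto)
  have Dc: "diagm 2 z \<in> carrier_mat 2 2" by simp
  have "W * diagm (2 + k) (\<lambda>i. if i < 2 then z i else 0) = four_block_mat (W2 * diagm 2 z) (0\<^sub>m 2 k) (0\<^sub>m k 2) (0\<^sub>m k k)"
    unfolding D W_def
    by (subst mult_four_block_mat[OF W2c c0(1,2,3) Dc c0(1,2,4)], insert W2c mult_carrier_mat[OF W2c Dc], simp)
  also have "\<dots> * mat_adjoint W = four_block_mat (W2 * diagm 2 z * mat_adjoint W2) (0\<^sub>m 2 k) (0\<^sub>m k 2) (0\<^sub>m k k)"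
    unfolding WH
    by (subst mult_four_block_mat[OF mult_carrier_mat[OF W2c Dc] c0(1,2,4) W2H c0(1,2,3)], insert W2c W2H mult_carrier_mat[OF mult_carrier_mat[OF W2c Dc] W2H], simp)
  also have "\<dots> = dsum_zero M k" unfolding dsum_zero_def M using W2c by simp
  finally show "dsum_zero M k = W * diagm (2 + k) (\<lambda>i. if i < 2 then z i else 0) * mat_adjoint W" by simp
qed




theorem mainTheorem4:
  fixes d :: nat and Q R :: "complex mat"
  assumes "d \<ge> 2" and "psd_mat d Q" and "psd_mat d R"
  defines "y \<equiv> complex_of_real (\<Sum>k<d. sqrt (Re (Q $$ (k,k)) * Re (R $$ (k,k))))"
  shows "(\<forall>N. ui_norm d N \<longrightarrow>
            N (Q + R) \<le> N (dsum_zero (mat2 (mtrace Q) y y (mtrace R)) (d - 2)))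
       \<and> (\<forall>q::real. 0 < q \<and> q \<le> 1 \<longrightarrow>
            schatten q (Q + R) \<ge> schatten q (mat2 (mtrace Q) y y (mtrace R)))"
proof -
  note d2 = assms(1) and Q = assms(2) and R = assms(3)
  have Qc: "Q \<in> carrier_mat d d" and Qh: "mat_adjoint Q = Q" using Q unfolding psd_mat_def by auto
  have Rc: "R \<in> carrier_mat d d" and Rh: "mat_adjoint R = R" using R unfolding psd_mat_def by auto
  define aQ where "aQ = (\<lambda>k. Re (Q $$ (k,k)))"
  define aR where "aR = (\<lambda>k. Re (R $$ (k,k)))"
  define al where "al = (\<Sum>k<d. aQ k)"
  define ga where "ga = (\<Sum>k<d. aR k)"
  define Y where "Y = (\<Sum>k<d. sqrt (aQ k * aR k))"
  have aQ0: "\<And>k. k < d \<Longrightarrow> 0 \<le> aQ k" unfolding aQ_def using psd_diag(2)[OF Q] by auto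
  have aR0: "\<And>k. k < d \<Longrightarrow> 0 \<le> aR k" unfolding aR_def using psd_diag(2)[OF R] by auto
  have al0: "0 \<le> al" unfolding al_def using aQ0 by (auto intro: sum_nonneg)
  have ga0: "0 \<le> ga" unfolding ga_def using aR0 by (auto intro: sum_nonneg)
  have Y0: "0 \<le> Y" unfolding Y_def using aQ0 aR0 by (auto intro!: sum_nonneg)
  have yY: "y = complex_of_real Y" unfolding y_def Y_def aQ_def aR_def ..
  have trQ: "mtrace Q = complex_of_real al"
  proof -
    have "mtrace Q = (\<Sum>k<d. Q $$ (k,k))" unfolding mtrace_def using Qc by simp
    also have "\<dots> = (\<Sum>k<d. complex_of_real (aQ k))"
      unfolding aQ_def by (rule sum.cong[OF refl], insert psd_diag(1)[OF Q], auto)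
    finally show ?thesis unfolding al_def by (simp only: of_real_sum)
  qed
  have trR: "mtrace R = complex_of_real ga"
  proof -
    have "mtrace R = (\<Sum>k<d. R $$ (k,k))" unfolding mtrace_def using Rc by simp
    also have "\<dots> = (\<Sum>k<d. complex_of_real (aR k))"
      unfolding aR_def by (rule sum.cong[OF refl], insert psd_diag(1)[OF R], auto)
    finally show ?thesis unfolding ga_def by (simp only: of_real_sum)
  qed
  define M where "M = mat2 (complex_of_real al) (complex_of_real Y) (complex_of_real Y) (complex_of_real ga)"
  have MM: "mat2 (mtrace Q) y y (mtrace R) = M" unfolding M_def trQ trR yY ..
  have Mh: "mat_adjoint M = M" unfolding M_def by (rule mat2_herm)
  have Mc: "M \<in> carrier_mat 2 2" unfolding M_def by simp
  obtain W2 z where W2: "unitary_mat 2 W2" and Mdec: "M = W2 * diagm 2 z * mat_adjoint W2"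
    using spectral[OF Mc Mh] by blast
  have tr1: "z 0 + z 1 = al + ga"
  proof -
    have "complex_of_real (\<Sum>i<2. z i) = (\<Sum>k<2. M $$ (k,k))" using trace_of_diag[OF W2 Mdec] by simp
    also have "\<dots> = complex_of_real (al + ga)" unfolding M_def mat2_trace by simp
    finally show ?thesis unfolding sum2 of_real_eq_iff .
  qed
  have tr2: "z 0 * z 0 + z 1 * z 1 = al * al + 2 * (Y * Y) + ga * ga"
  proof -
    have MMd: "M * M = W2 * diagm 2 (\<lambda>i. z i * z i) * mat_adjoint W2" by (rule square_of_diag[OF W2 Mdec])
    have "complex_of_real (\<Sum>i<2. z i * z i) = (\<Sum>k<2. (M * M) $$ (k,k))" using trace_of_diag[OF W2 MMd] by simp
    also have "\<dots> = complex_of_real (al * al + 2 * (Y * Y) + ga * ga)" unfolding M_def mat2_trace_sq by simp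
    finally show ?thesis unfolding sum2 of_real_eq_iff .
  qed
  have cs: "Y * Y \<le> al * ga"
  proof -
    have "(\<Sum>k\<in>{..<d}. sqrt (aQ k) * sqrt (aR k))^2 \<le> (\<Sum>k\<in>{..<d}. (sqrt (aQ k))^2) * (\<Sum>k\<in>{..<d}. (sqrt (aR k))^2)"
      by (rule cs_sum)
    also have "(\<Sum>k\<in>{..<d}. (sqrt (aQ k))^2) = al" unfolding al_def by (rule sum.cong, insert aQ0, auto)
    also have "(\<Sum>k\<in>{..<d}. (sqrt (aR k))^2) = ga" unfolding ga_def by (rule sum.cong, insert aR0, auto)
    also have "(\<Sum>k\<in>{..<d}. sqrt (aQ k) * sqrt (aR k)) = Y" unfolding Y_def by (simp add: real_sqrt_mult)
    finally show ?thesis by (simp add: power2_eq_square)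
  qed
  note re = real_eig2[OF tr1 tr2 cs Y0 al0 ga0]
  define m where "m = max (z 0) (z 1)"
  define m' where "m' = min (z 0) (z 1)"
  have m'0: "0 \<le> m'" and m'm: "m' \<le> m" and mm: "m + m' = al + ga" using re(1-3) unfolding m_def m'_def by auto
  have Hm: "\<And>s t. 0 \<le> s \<Longrightarrow> 0 \<le> t \<Longrightarrow> s^2 * al + 2 * s * t * Y + t^2 * ga \<le> m * (s^2 + t^2)"
    using re(4) unfolding m_def by blast
  have Pc: "Q + R \<in> carrier_mat d d" using Qc Rc by auto
  have Ph: "mat_adjoint (Q + R) = Q + R"
  proof (rule eq_matI)
    fix i j assume "i < dim_row (Q + R)" "j < dim_col (Q + R)"
    hence i: "i < d" and j: "j < d" using Qc Rc by auto
    show "mat_adjoint (Q + R) $$ (i,j) = (Q + R) $$ (i,j)"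
      using i j Qc Rc herm_entry[OF Qc Qh j i] herm_entry[OF Rc Rh j i] by simp
  qed (insert Qc Rc, auto)
  obtain U x where U: "unitary_mat d U" and Pdec: "Q + R = U * diagm d x * mat_adjoint U"
    using spectral[OF Pc Ph] by blast
  have bnd: "\<forall>i<d. 0 \<le> x i \<and> x i \<le> m"
  proof (intro allI impI)
    fix i assume i: "i < d"
    show "0 \<le> x i \<and> x i \<le> m"
      by (rule eig_bound[OF Q R U Pdec i], insert Hm, unfold al_def ga_def Y_def aQ_def aR_def, blast)
  qed
  have sx: "sum x {..<d} = m + m'"
  proof -
    have "complex_of_real (\<Sum>i<d. x i) = (\<Sum>k<d. (Q + R) $$ (k,k))" using trace_of_diag[OF U Pdec] by simp
    also have "\<dots> = (\<Sum>k<d. Q $$ (k,k)) + (\<Sum>k<d. R $$ (k,k))"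
      using Qc Rc by (simp add: sum.distrib)
    also have "\<dots> = mtrace Q + mtrace R" unfolding mtrace_def using Qc Rc by simp
    also have "\<dots> = complex_of_real (al + ga)" unfolding trQ trR by simp
    finally show ?thesis using mm by (simp only: of_real_eq_iff)
  qed
  define p1 where "p1 = (if z 1 \<le> z 0 then 0 else 1 :: nat)"
  define p2 where "p2 = (if z 1 \<le> z 0 then 1 else 0 :: nat)"
  have p: "p1 < d" "p2 < d" "p1 \<noteq> p2" unfolding p1_def p2_def using d2 by auto
  define y0 where "y0 = (\<lambda>i::nat. if i < 2 then z i else 0)"
  have yv: "(\<lambda>k. if k = p1 then m else if k = p2 then m' else 0) = y0"
  proof
    fix k
    show "(if k = p1 then m else if k = p2 then m' else 0) = y0 k"
      unfolding y0_def p1_def p2_def m_def m'_def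
      by (cases "z 1 \<le> z 0"; cases "k = 0"; cases "k = 1"; auto)
  qed
  have dd: "2 + (d - 2) = d" using d2 by simp
  obtain W where W: "unitary_mat d W" and Wdec: "dsum_zero M (d - 2) = W * diagm d y0 * mat_adjoint W"
    using dsum_block[OF W2 Mdec, of "d - 2"] unfolding dd y0_def by blast
  have part1: "\<forall>N. ui_norm d N \<longrightarrow> N (Q + R) \<le> N (dsum_zero (mat2 (mtrace Q) y y (mtrace R)) (d - 2))"
  proof (intro allI impI)
    fix N assume N: "ui_norm d N"
    define \<Phi> where "\<Phi> = (\<lambda>v. N (diagm d v))"
    have T: "\<And>v i j a b A B. i < d \<Longrightarrow> j < d \<Longrightarrow> i \<noteq> j \<Longrightarrow> 0 \<le> B \<Longrightarrow> B \<le> a \<Longrightarrow> a \<le> A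
     \<Longrightarrow> a + b = A + B \<Longrightarrow> \<Phi> (v(i:=a, j:=b)) \<le> \<Phi> (v(i:=A, j:=B))"
      unfolding \<Phi>_def by (rule N_T[OF N])
    have E: "\<And>v w. (\<forall>k<d. v k = w k) \<Longrightarrow> \<Phi> v = \<Phi> w"
    proof -
      fix v w :: "nat \<Rightarrow> real" assume "\<forall>k<d. v k = w k"
      hence "diagm d v = diagm d w" by (intro eq_matI, auto)
      thus "\<Phi> v = \<Phi> w" unfolding \<Phi>_def by simp
    qed
    have "\<Phi> x \<le> \<Phi> (\<lambda>k. if k = p1 then m else if k = p2 then m' else 0)"
      by (rule major[where \<Phi>=\<Phi> and d=d, OF T E p m'0 m'm bnd sx])
    hence maj: "\<Phi> x \<le> \<Phi> y0" unfolding yv .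
    have "N (Q + R) = \<Phi> x" unfolding \<Phi>_def Pdec by (rule N_unitary_inv[OF N U diagm_carrier])
    also have "\<dots> \<le> \<Phi> y0" by (rule maj)
    also have "\<Phi> y0 = N (dsum_zero M (d - 2))" unfolding \<Phi>_def Wdec
      by (rule N_unitary_inv[OF N W diagm_carrier, symmetric])
    finally show "N (Q + R) \<le> N (dsum_zero (mat2 (mtrace Q) y y (mtrace R)) (d - 2))" unfolding MM .
  qed
  have part2: "\<forall>q::real. 0 < q \<and> q \<le> 1 \<longrightarrow> schatten q (Q + R) \<ge> schatten q (mat2 (mtrace Q) y y (mtrace R))"
  proof (intro allI impI)
    fix q :: real assume "0 < q \<and> q \<le> 1"
    hence q: "0 < q" "q \<le> 1" by auto
    define \<Psi> where "\<Psi> = (\<lambda>v. - (\<Sum>k<d. v k powr q))"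
    have T: "\<And>v i j a b A B. i < d \<Longrightarrow> j < d \<Longrightarrow> i \<noteq> j \<Longrightarrow> 0 \<le> B \<Longrightarrow> B \<le> a \<Longrightarrow> a \<le> A
     \<Longrightarrow> a + b = A + B \<Longrightarrow> \<Psi> (v(i:=a, j:=b)) \<le> \<Psi> (v(i:=A, j:=B))"
    proof -
      fix v :: "nat \<Rightarrow> real" and i j :: nat and a b A B :: real assume ij: "i < d" "j < d" "i \<noteq> j" and ab: "0 \<le> B" "B \<le> a" "a \<le> A" "a + b = A + B"
      have "A powr q + B powr q \<le> a powr q + b powr q" by (rule powr_pair[OF q ab])
      thus "\<Psi> (v(i:=a, j:=b)) \<le> \<Psi> (v(i:=A, j:=B))"
        unfolding \<Psi>_def sum_upd2[OF ij, of "\<lambda>r. r powr q"] by simp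
    qed
    have E: "\<And>v w. (\<forall>k<d. v k = w k) \<Longrightarrow> \<Psi> v = \<Psi> w"
      unfolding \<Psi>_def by (auto intro!: sum.cong)
    have "\<Psi> x \<le> \<Psi> (\<lambda>k. if k = p1 then m else if k = p2 then m' else 0)"
      by (rule major[where \<Phi>=\<Psi> and d=d, OF T E p m'0 m'm bnd sx])
    also have "(\<lambda>k. if k = p1 then m else if k = p2 then m' else 0) = ((\<lambda>_. 0::real)(p1 := m, p2 := m'))"
      using p(3) by (auto simp: fun_eq_iff)
    also have "\<Psi> \<dots> = - (m powr q + m' powr q)"
      unfolding \<Psi>_def sum_upd2[OF p, of "\<lambda>r. r powr q"] by simp
    finally have ineq: "m powr q + m' powr q \<le> (\<Sum>k<d. x k powr q)" unfolding \<Psi>_def by simp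
    have sQR: "schatten q (Q + R) = (\<Sum>k<d. x k powr q) powr (1/q)"
    proof -
      have "(\<Sum>i<d. \<bar>x i\<bar> powr q) = (\<Sum>k<d. x k powr q)"
        by (rule sum.cong[OF refl], insert bnd, auto)
      thus ?thesis unfolding schatten_of_diag[OF U Pdec] by simp
    qed
    have z0: "0 \<le> z 0" "0 \<le> z 1" using m'0 unfolding m'_def by auto
    have "schatten q M = (\<Sum>i<2. \<bar>z i\<bar> powr q) powr (1/q)" by (rule schatten_of_diag[OF W2 Mdec])
    also have "(\<Sum>i<2. \<bar>z i\<bar> powr q) = m powr q + m' powr q"
      unfolding sum2 m_def m'_def using z0 by (auto simp: max_def min_def)
    finally have sM: "schatten q M = (m powr q + m' powr q) powr (1/q)" .
    have "(m powr q + m' powr q) powr (1/q) \<le> (\<Sum>k<d. x k powr q) powr (1/q)"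
      by (rule powr_mono2, insert q ineq, auto)
    thus "schatten q (Q + R) \<ge> schatten q (mat2 (mtrace Q) y y (mtrace R))"
      unfolding MM sQR sM .
  qed
  show ?thesis using part1 part2 by blast
qed



end
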